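(* Let $n,d\ge2$ and $\mathcal T=\sum_{k=1}^{n+1}\mathbf v_k^{\otimes d}$. (i) If $d=2$, every $\mathbf v\in\mathbb R^n$ with $\|\mathbf v\|=1$ is an eigenvector of $\mathcal T$ with eigenvalue $\mu=1+\frac1n$. (ii) If $d\ge3$ is odd, $\mathbf v\in\mathbb R^n$ with $\|\mathbf v\|=1$ is an eigenvector of $\mathcal T$ if and only if there is a nonempty $K\subset\{1,\ldots,n+1\}$ with $|K|\le n$ such that $$\mathbf v=\frac{\sum_{k\in K}\mathbf v_k}{\|\sum_{k\in K}\mathbf v_k\|}=\frac{\sum_{k\in K}\mathbf v_k}{\sqrt{|K|(n+1-|K|)/n}},$$ and then the eigenvalue is $\mu=\dfrac{(n+1-|K|)^{d-1}-|K|^{d-1}}{n^{d/2}\,(|K|(n+1-|K|))^{d/2-1}}$. In particular $\mu=0$ exactly when $2|K|=n+1$, so for $n$ even all eigenvalues are nonzero. (iii) If $d\ge4$ is even, $\mathbf v\in\mathbb R^n$ with $\|\mathbf v\|=1$ is an eigenvector of $\mathcal T$ if and only if either (a) there is a nonempty $K\subset\{1,\ldots,n+1\}$ with $|K|\le n$ such that $\mathbf v=\sum_{k\in K}\mathbf v_k/\|\sum_{k\in K}\mathbf v_k\|$, with positive eigenvalue $\mu=\dfrac{(n+1-|K|)^{d-1}+|K|^{d-1}}{n^{d/2}(|K|(n+1-|K|))^{d/2-1}}$; or (b) there are nonempty disjoint $K_1,K_2\subset\{1,\ldots,n+1\}$, each of cardinality at most $n$, and numbers $0<a\le s^*<b\le1$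 with $|K_1|a+|K_2|b=1$ and $\frac{g(a)}{a}=\frac{g(b)}{b}$, such that $$\mathbf v=\frac{a\sum_{k\in K_1}\mathbf v_k+b\sum_{k\in K_2}\mathbf v_k}{\sqrt{\big((n+1)a^2|K_1|+(n+1)b^2|K_2|-1\big)/n}},$$ with positive eigenvalue $$\mu=\frac{|K_1|((n+1)a-1)^d+|K_2|((n+1)b-1)^d+n+1-|K_1|-|K_2|}{n^{d/2}\big((n+1)a^2|K_1|+(n+1)b^2|K_2|-1\big)^{d/2}}.$$
   Context: Simplex frame: for $n\ge 2$, $\mathbf v_k=\sqrt{1+\frac1n}\,\mathbf e_k-\frac{1}{n^{3/2}}(\sqrt{n+1}-1)\mathbf 1_n$ ($1\le k\le n$), $\mathbf v_{n+1}=-\frac{1}{\sqrt n}\mathbf 1_n$, with $\mathbf e_k$ unit vectors in $\mathbb R^n$, $\mathbf 1_n=(1,\ldots,1)^\top$; $\|\mathbf v_k\|=1$, $\langle\mathbf v_k,\mathbf v_j\rangle=-\frac1n$ ($k\ne j$), $\sum_k\mathbf v_k=\mathbf 0$. $\mathcal T=\sum_{k=1}^{n+1}\mathbf v_k^{\otimes d}$ with $(\mathbf v^{\otimes d})_{i_1\ldots i_d}=v_{i_1}\cdots v_{i_d}$; $\mathcal T\cdot\mathbf v^{d-1}=\sum_k\langle\mathbf v,\mathbf v_k\rangle^{d-1}\mathbf v_k$. $\mathbf v\ne\mathbf 0$ is an eigenvector with eigenvalue $\mu$ if $\mathcal T\cdot\mathbf v^{d-1}=\mu\mathbf v$. $g(s)=((n+1)s-1)^{d-1}-(-1)^{d-1}$.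 For even $d\ge4$, $s^*$ is the unique point in $[\frac1n,\frac2{n+1})$ such that $p(s)=g(s)/s$ is strictly decreasing on $[0,s^*]$ and strictly increasing on $[s^*,\infty)$. *)

theory Defs
  imports "HOL-Analysis.Analysis"
begin

text \<open>Vectors of R^n are elements of real^'n with n = CARD('n).  The n+1 simplex
  frame vectors v_1..v_{n+1} are indexed by 'n option: Some i corresponds to
  v_k with e_k = axis i 1, and None corresponds to v_{n+1}.\<close>

definition simplex_vec :: "'n::finite option \<Rightarrow> real^'n" where
  "simplex_vec k = (case k of
      Some i \<Rightarrow> (\<chi> j. sqrt (1 + 1 / real CARD('n)) * (if j = i then 1 else 0)
                     - (sqrt (real CARD('n) + 1) - 1) / (real CARD('n) powr (3/2)))
    | None \<Rightarrow> (\<chi> j. - 1 / sqrt (real CARD('n))))"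

text \<open>A tensor of order d on R^n, given by its entries T i_1 ... i_d
  (indices passed as a list of length d).\<close>

definition simplex_tensor :: "'n::finite list \<Rightarrow> real" where
  "simplex_tensor is = (\<Sum>k\<in>UNIV. prod_list (map (\<lambda>i. simplex_vec k $ i) is))"

definition tensor_apply :: "('n::finite list \<Rightarrow> real) \<Rightarrow> nat \<Rightarrow> real^'n \<Rightarrow> real^'n" where
  "tensor_apply T d v = (\<chi> i. \<Sum>js\<in>{js. length js = d - 1}.
       T (i # js) * prod_list (map (\<lambda>j. v $ j) js))"

definition tensor_eigenpair ::
  "('n::finite list \<Rightarrow> real) \<Rightarrow> nat \<Rightarrow> real^'n \<Rightarrow> real \<Rightarrow> bool" where
  "tensor_eigenpair T d v \<mu> \<longleftrightarrow> v \<noteq> 0 \<and> tensor_apply T d v = \<mu> *\<^sub>R v"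

definition g_fun :: "nat \<Rightarrow> nat \<Rightarrow> real \<Rightarrow> real" where
  "g_fun n d s = ((real n + 1) * s - 1) ^ (d - 1) - (-1) ^ (d - 1)"

text \<open>s*: p(s) = g(s)/s strictly decreasing on (0,s*] and strictly increasing on
  [s*,\<infinity>); the point s = 0 is excluded since g(0)/0 is only defined as a limit.\<close>

definition s_star :: "nat \<Rightarrow> nat \<Rightarrow> real" where
  "s_star n d = (THE s. 1 / real n \<le> s \<and> s < 2 / (real n + 1) \<and>
      strict_antimono_on {0<..s} (\<lambda>t. g_fun n d t / t) \<and>
      strict_mono_on {s..} (\<lambda>t. g_fun n d t / t))"

end

theory Submission
  imports Defs
begin

lemma sum_option: "(\<Sum>k\<in>(UNIV::'a::finite option set). f k) = f None + (\<Sum>i\<in>UNIV. f (Some i))"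
proof -
  have "(UNIV::'a option set) = insert None (range Some)" by (rule UNIV_option_conv)
  then have "(\<Sum>k\<in>(UNIV::'a option set). f k) = (\<Sum>k\<in>insert None (range Some). f k)" by simp
  also have "\<dots> = f None + (\<Sum>k\<in>range Some. f k)" by (subst sum.insert) auto
  also have "(\<Sum>k\<in>range Some. f k) = (\<Sum>i\<in>UNIV. f (Some i))" by (subst sum.reindex) auto
  finally show ?thesis .
qed

lemma card_option: "card (UNIV::'a::finite option set) = CARD('a) + 1"
proof -
  have "(UNIV::'a option set) = insert None (range Some)" by (rule UNIV_option_conv)
  then have "card (UNIV::'a option set) = card (insert None (range (Some::'a\<Rightarrow>_)))" by simp
  also have "\<dots> = Suc (card (range (Some::'a\<Rightarrow>_)))" by (subst card_insert_disjoint) auto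
  also have "card (range (Some::'a\<Rightarrow>_)) = CARD('a)" by (simp add: card_image)
  finally show ?thesis by simp
qed

definition "al (t::'n::finite itself) = sqrt (1 + 1 / real CARD('n))"
definition "be (t::'n::finite itself) = (sqrt (real CARD('n) + 1) - 1) / (real CARD('n) powr (3/2))"
definition "ga (t::'n::finite itself) = 1 / sqrt (real CARD('n))"

lemma consts_id:
  fixes t :: "'n::finite itself"
  defines "N \<equiv> real CARD('n)"
  shows "al t ^ 2 = 1 + 1/N" "al t - N * be t = ga t" "ga t ^ 2 = 1 / N"
    "N * be t ^ 2 - 2 * al t * be t = - 1 / N"
proof -
  have N0: "N > 0" unfolding N_def by simp
  define s where "s = sqrt N"
  define r where "r = sqrt (N+1)"
  have s0: "s > 0" using N0 s_def by simp
  have ss: "s^2 = N" using N0 s_def by simp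
  have rr: "r^2 = N + 1" using N0 r_def by simp
  have rr2: "r * (r * 2) = 2 + 2*N" using rr by (simp add: power2_eq_square)
  have p32: "N powr (3/2) = N * s"
  proof -
    have "N powr (3/2) = N powr (1 + 1/2)" by simp
    also have "\<dots> = N powr 1 * N powr (1/2)" by (rule powr_add)
    also have "\<dots> = N * s" using N0 by (simp add: s_def powr_half_sqrt)
    finally show ?thesis .
  qed
  have al: "al t = r / s" unfolding al_def r_def s_def N_def[symmetric]
    using N0 by (simp add: real_sqrt_divide[symmetric] field_simps)
  have be: "be t = (r - 1) / (N * s)" unfolding be_def p32[unfolded N_def] r_def s_def N_def by simp
  have ga: "ga t = 1 / s" unfolding ga_def s_def N_def by simp
  show "al t ^ 2 = 1 + 1/N" using N0 by (simp add: al_def N_def)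
  show "al t - N * be t = ga t" unfolding al be ga using s0 N0 by (simp add: field_simps)
  show "ga t ^ 2 = 1 / N" unfolding ga using ss by (simp add: power_divide)
  show "N * be t ^ 2 - 2 * al t * be t = - 1 / N" unfolding al be using s0 N0 ss rr
    by (simp add: field_simps power2_eq_square) (simp add: rr2 algebra_simps)
qed

lemma sv_Some: "(simplex_vec (Some i) :: real^'n::finite) $ j = al (TYPE('n)) * (if j = i then 1 else 0) - be (TYPE('n))"
  by (simp add: simplex_vec_def al_def be_def)

lemma sv_None: "(simplex_vec None :: real^'n::finite) $ j = - ga (TYPE('n))"
  by (simp add: simplex_vec_def ga_def)

lemma sum_delta_prod:
  fixes a b :: real
  shows "(\<Sum>l\<in>(UNIV::'n::finite set). (a * (if l = i then 1 else 0) - b) * (a * (if l = j then 1 else 0) - b))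
     = a^2 * (if i = j then 1 else 0) - 2 * a * b + real CARD('n) * b^2"
proof -
  have "\<And>l. (a * (if l = i then 1 else 0) - b) * (a * (if l = j then 1 else 0) - b)
      = (if l = i then (if i = j then a^2 else 0) else 0) - (if l = i then a*b else 0) - (if l = j then a*b else 0) + b^2"
    by (auto simp: algebra_simps power2_eq_square)
  then show ?thesis by (simp add: sum.distrib sum_subtractf)
qed

lemma sum_delta_lin:
  fixes a b :: real
  shows "(\<Sum>l\<in>(UNIV::'n::finite set). (a * (if l = i then 1 else 0) - b)) = a - real CARD('n) * b"
proof -
  have "\<And>l. (a * (if l = i then 1 else 0) - b) = (if l = i then a else 0) - b" by auto
  then show ?thesis by (simp add: sum_subtractf)
qed

lemma sum_delta_lin':
  fixes a b :: real
  shows "(\<Sum>l\<in>(UNIV::'n::finite set). (a * (if i = l then 1 else 0) - b)) = a - real CARD('n) * b"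
  using sum_delta_lin[of a i b] by (simp add: eq_commute)

lemma inner_V:
  "simplex_vec j \<bullet> (simplex_vec k :: real^'n::finite) = (if j = k then 1 else - 1 / real CARD('n))"
proof -
  note c = consts_id[of "TYPE('n)"]
  have N0: "real CARD('n) > 0" by simp
  show ?thesis
  proof (cases j; cases k)
    assume "j = None" "k = None" then show ?thesis
      using c(3) by (simp add: inner_vec_def sv_None power2_eq_square)
  next
    fix b assume "j = None" "k = Some b" then show ?thesis
      using sum_delta_lin[of "al TYPE('n)" b "be TYPE('n)"] c(2,3)
      by (simp add: inner_vec_def sv_None sv_Some sum_negf sum_distrib_left[symmetric] power2_eq_square)
  next
    fix a assume "j = Some a" "k = None" then show ?thesis
      using sum_delta_lin[of "al TYPE('n)" a "be TYPE('n)"] c(2,3)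
      by (simp add: inner_vec_def sv_None sv_Some sum_negf sum_distrib_right[symmetric] power2_eq_square)
  next
    fix a b assume "j = Some a" "k = Some b" then show ?thesis
      using sum_delta_prod[of "al TYPE('n)" a "be TYPE('n)" b] c(1,4) N0
      by (auto simp add: inner_vec_def sv_Some algebra_simps)
  qed
qed

lemma sum_V: "(\<Sum>k\<in>UNIV. simplex_vec k :: real^'n::finite) = 0"
proof -
  note c = consts_id[of "TYPE('n)"]
  show ?thesis
  proof (rule vec_eq_iff[THEN iffD2], rule allI)
    fix j :: 'n
    show "(\<Sum>k\<in>UNIV. simplex_vec k :: real^'n) $ j = 0 $ j"
      using sum_delta_lin'[of "al TYPE('n)" j "be TYPE('n)"] c(2)
      by (simp add: sum_component sum_option sv_None sv_Some)
  qed
qed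

lemma frame_mat:
  "(\<Sum>k\<in>UNIV. (simplex_vec k :: real^'n::finite) $ i * simplex_vec k $ j) = (if i = j then 1 + 1 / real CARD('n) else 0)"
proof -
  note c = consts_id[of "TYPE('n)"]
  have "(\<Sum>k\<in>UNIV. (simplex_vec k :: real^'n::finite) $ i * simplex_vec k $ j)
     = ga TYPE('n) ^ 2 + (\<Sum>l\<in>UNIV. (al TYPE('n) * (if l = i then 1 else 0) - be TYPE('n)) * (al TYPE('n) * (if l = j then 1 else 0) - be TYPE('n)))"
    by (simp add: sum_option sv_None sv_Some power2_eq_square eq_commute)
  also have "\<dots> = (if i = j then 1 + 1 / real CARD('n) else 0)"
    unfolding sum_delta_prod using c(1,3,4) by (auto simp: algebra_simps)
  finally show ?thesis .
qed

lemma frame_expand: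
  fixes w :: "real^'n::finite"
  shows "w = (real CARD('n) / (real CARD('n) + 1)) *\<^sub>R (\<Sum>k\<in>UNIV. (w \<bullet> simplex_vec k) *\<^sub>R simplex_vec k)"
proof (rule vec_eq_iff[THEN iffD2], rule allI)
  fix i :: 'n
  have N0: "real CARD('n) > 0" by simp
  have "(\<Sum>k\<in>UNIV. (w \<bullet> simplex_vec k) *\<^sub>R (simplex_vec k :: real^'n)) $ i
      = (\<Sum>k\<in>UNIV. (\<Sum>l\<in>UNIV. w $ l * simplex_vec k $ l) * (simplex_vec k :: real^'n) $ i)"
    by (simp add: sum_component inner_vec_def)
  also have "\<dots> = (\<Sum>l\<in>UNIV. w $ l * (\<Sum>k\<in>UNIV. (simplex_vec k :: real^'n) $ l * simplex_vec k $ i))"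
    by (simp add: sum_distrib_right sum_distrib_left mult.assoc) (rule sum.swap)
  also have "\<dots> = w $ i * (1 + 1 / real CARD('n))"
    by (simp add: frame_mat if_distrib cong: if_cong)
  finally show "w $ i = ((real CARD('n) / (real CARD('n) + 1)) *\<^sub>R (\<Sum>k\<in>UNIV. (w \<bullet> simplex_vec k) *\<^sub>R simplex_vec k)) $ i"
    using N0 by (simp add: field_simps)
qed

lemma inner_determines:
  fixes a b :: "real^'n::finite"
  assumes "\<And>k. a \<bullet> simplex_vec k = b \<bullet> simplex_vec k"
  shows "a = b"
  by (subst frame_expand, subst (2) frame_expand) (simp add: assms)

lemma sum_lists_prod:
  fixes f :: "'n::finite \<Rightarrow> real"
  shows "(\<Sum>js\<in>{js. length js = m}. prod_list (map f js)) = (\<Sum>i\<in>UNIV. f i) ^ m"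
proof (induction m)
  case 0
  have "{js::'n list. length js = 0} = {[]}" by auto
  then show ?case by simp
next
  case (Suc m)
  have eq: "{js::'n list. length js = Suc m} = (\<lambda>(x,xs). x # xs) ` (UNIV \<times> {js. length js = m})"
    by (auto simp: length_Suc_conv image_iff)
  have inj: "inj_on (\<lambda>(x,xs). x # xs) (UNIV \<times> {js::'n list. length js = m})"
    by (auto simp: inj_on_def)
  have fin: "finite {js::'n list. length js = m}" using finite_lists_length_eq[of "UNIV::'n set" m] by simp
  have "(\<Sum>js\<in>{js. length js = Suc m}. prod_list (map f js))
      = (\<Sum>(x,xs)\<in>UNIV \<times> {js. length js = m}. f x * prod_list (map f xs))"
    unfolding eq by (subst sum.reindex[OF inj]) (auto intro!: sum.cong split: prod.splits)
  also have "\<dots> = (\<Sum>x\<in>UNIV. \<Sum>xs\<in>{js. length js = m}. f x * prod_list (map f xs))"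
    by (rule sum.cartesian_product[symmetric])
  also have "\<dots> = (\<Sum>x\<in>UNIV. f x) * (\<Sum>xs\<in>{js. length js = m}. prod_list (map f xs))"
    by (simp add: sum_product)
  finally show ?case using Suc by simp
qed

lemma prod_list_map_mult: "prod_list (map f xs) * prod_list (map g xs) = prod_list (map (\<lambda>x. (f x :: real) * g x) xs)"
  by (induction xs) (auto simp: algebra_simps)

lemma tensor_formula:
  fixes v :: "real^'n::finite"
  shows "tensor_apply simplex_tensor d v = (\<Sum>k\<in>UNIV. (v \<bullet> simplex_vec k) ^ (d - 1) *\<^sub>R simplex_vec k)"
proof (rule vec_eq_iff[THEN iffD2], rule allI)
  fix i :: 'n
  have "tensor_apply simplex_tensor d v $ i
      = (\<Sum>js\<in>{js. length js = d - 1}. \<Sum>k\<in>UNIV. (simplex_vec k :: real^'n) $ i *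
           prod_list (map (\<lambda>j. (simplex_vec k :: real^'n) $ j * v $ j) js))"
    by (simp add: tensor_apply_def simplex_tensor_def sum_distrib_right prod_list_map_mult mult.assoc)
  also have "\<dots> = (\<Sum>k\<in>UNIV. (simplex_vec k :: real^'n) $ i *
        (\<Sum>js\<in>{js. length js = d - 1}. prod_list (map (\<lambda>j. (simplex_vec k :: real^'n) $ j * v $ j) js)))"
    by (subst sum.swap) (simp add: sum_distrib_left)
  also have "\<dots> = (\<Sum>k\<in>UNIV. (v \<bullet> simplex_vec k) ^ (d - 1) * (simplex_vec k :: real^'n) $ i)"
    by (simp add: sum_lists_prod inner_vec_def mult.commute)
  finally show "tensor_apply simplex_tensor d v $ i = (\<Sum>k\<in>UNIV. (v \<bullet> simplex_vec k) ^ (d - 1) *\<^sub>R simplex_vec k) $ i"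
    by (simp add: sum_component)
qed

lemma inner_comb:
  "(\<Sum>k\<in>UNIV. c k *\<^sub>R (simplex_vec k :: real^'n::finite)) \<bullet> simplex_vec j
     = ((real CARD('n) + 1) * c j - (\<Sum>k\<in>UNIV. c k)) / real CARD('n)"
proof -
  have N0: "real CARD('n) > 0" by simp
  have "(\<Sum>k\<in>UNIV. c k *\<^sub>R (simplex_vec k :: real^'n::finite)) \<bullet> simplex_vec j
      = (\<Sum>k\<in>UNIV. c k * (if k = j then 1 else - 1 / real CARD('n)))"
    by (simp add: inner_sum_left inner_V)
  also have "\<dots> = (\<Sum>k\<in>UNIV. (if k = j then c j * (1 + 1 / real CARD('n)) else 0) - c k / real CARD('n))"
    by (rule sum.cong) (auto simp: field_simps)
  also have "\<dots> = c j * (1 + 1 / real CARD('n)) - (\<Sum>k\<in>UNIV. c k) / real CARD('n)"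
    by (simp add: sum_subtractf sum_divide_distrib)
  also have "\<dots> = ((real CARD('n) + 1) * c j - (\<Sum>k\<in>UNIV. c k)) / real CARD('n)"
    using N0 by (simp add: field_simps)
  finally show ?thesis .
qed

lemma norm2_comb:
  "norm (\<Sum>k\<in>UNIV. c k *\<^sub>R (simplex_vec k :: real^'n::finite)) ^ 2
     = ((real CARD('n) + 1) * (\<Sum>k\<in>UNIV. c k ^ 2) - (\<Sum>k\<in>UNIV. c k) ^ 2) / real CARD('n)"
proof -
  let ?w = "(\<Sum>k\<in>UNIV. c k *\<^sub>R (simplex_vec k :: real^'n::finite))"
  have N0: "real CARD('n) > 0" by simp
  have "norm ?w ^ 2 = ?w \<bullet> ?w" by (simp add: power2_norm_eq_inner)
  also have "\<dots> = (\<Sum>j\<in>UNIV. c j * (?w \<bullet> simplex_vec j))"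
    by (simp only: inner_sum_right inner_scaleR_right)
  also have "\<dots> = (\<Sum>j\<in>UNIV. ((real CARD('n) + 1) * c j ^ 2 - c j * (\<Sum>k\<in>UNIV. c k)) / real CARD('n))"
    by (simp add: inner_comb field_simps power2_eq_square)
  also have "\<dots> = ((real CARD('n) + 1) * (\<Sum>k\<in>UNIV. c k ^ 2) - (\<Sum>k\<in>UNIV. c k) ^ 2) / real CARD('n)"
    by (simp add: sum_divide_distrib[symmetric] sum_subtractf sum_distrib_left[symmetric] sum_distrib_right[symmetric] power2_eq_square)
  finally show ?thesis .
qed

lemma sum_x_zero: "(\<Sum>k\<in>UNIV. (v::real^'n::finite) \<bullet> simplex_vec k) = 0"
  by (simp add: inner_sum_right[symmetric] sum_V)

lemma x_nonzero:
  assumes "(v::real^'n::finite) \<noteq> 0" shows "\<exists>k. v \<bullet> simplex_vec k \<noteq> 0"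
proof (rule ccontr)
  assume "\<not> ?thesis"
  then have "v = 0" by (subst frame_expand) simp
  then show False using assms by simp
qed

lemma eig_imp:
  fixes v :: "real^'n::finite"
  assumes "tensor_eigenpair simplex_tensor d v \<mu>"
  shows "(real CARD('n) + 1) * (v \<bullet> simplex_vec j) ^ (d - 1) - real CARD('n) * \<mu> * (v \<bullet> simplex_vec j)
          = (\<Sum>k\<in>UNIV. (v \<bullet> simplex_vec k) ^ (d - 1))"
proof -
  have N0: "real CARD('n) > 0" by simp
  have e: "(\<Sum>k\<in>UNIV. (v \<bullet> simplex_vec k) ^ (d - 1) *\<^sub>R simplex_vec k) = \<mu> *\<^sub>R v"
    using assms unfolding tensor_eigenpair_def tensor_formula by simp
  have "((real CARD('n) + 1) * (v \<bullet> simplex_vec j) ^ (d - 1) - (\<Sum>k\<in>UNIV. (v \<bullet> simplex_vec k) ^ (d - 1))) / real CARD('n)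
      = \<mu> * (v \<bullet> simplex_vec j)"
    using arg_cong[OF e, of "\<lambda>w. w \<bullet> simplex_vec j"] by (simp add: inner_comb)
  then show ?thesis using N0 by (simp add: field_simps)
qed

lemma eig_intro:
  fixes v :: "real^'n::finite"
  assumes "v \<noteq> 0"
    and "\<And>j. (real CARD('n) + 1) * (v \<bullet> simplex_vec j) ^ (d - 1) - real CARD('n) * \<mu> * (v \<bullet> simplex_vec j) = c"
  shows "tensor_eigenpair simplex_tensor d v \<mu>"
proof -
  have N0: "real CARD('n) > 0" by simp
  let ?S = "(\<Sum>k\<in>UNIV. (v \<bullet> simplex_vec k) ^ (d - 1))"
  have "(\<Sum>j\<in>UNIV. (real CARD('n) + 1) * (v \<bullet> simplex_vec j) ^ (d - 1) - real CARD('n) * \<mu> * (v \<bullet> simplex_vec j))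
      = (\<Sum>j\<in>(UNIV::'n option set). c)" using assms(2) by simp
  then have "(real CARD('n) + 1) * ?S - real CARD('n) * \<mu> * 0 = (real CARD('n) + 1) * c"
    by (simp add: sum_subtractf sum_distrib_left[symmetric] sum_x_zero card_option)
  then have cS: "c = ?S" using N0 by simp
  have "(\<Sum>k\<in>UNIV. (v \<bullet> simplex_vec k) ^ (d - 1) *\<^sub>R simplex_vec k) = \<mu> *\<^sub>R v"
  proof (rule inner_determines)
    fix j
    show "(\<Sum>k\<in>UNIV. (v \<bullet> simplex_vec k) ^ (d - 1) *\<^sub>R simplex_vec k) \<bullet> simplex_vec j = (\<mu> *\<^sub>R v) \<bullet> simplex_vec j"
      using assms(2)[of j] cS N0 by (simp add: inner_comb field_simps)
  qed
  then show ?thesis using assms(1) unfolding tensor_eigenpair_def tensor_formula by simp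
qed

lemma eig_mu:
  fixes v :: "real^'n::finite"
  assumes "tensor_eigenpair simplex_tensor d v \<mu>" "norm v = 1" "d \<ge> 1"
  shows "\<mu> = (\<Sum>k\<in>UNIV. (v \<bullet> simplex_vec k) ^ d)"
proof -
  have e: "(\<Sum>k\<in>UNIV. (v \<bullet> simplex_vec k) ^ (d - 1) *\<^sub>R simplex_vec k) = \<mu> *\<^sub>R v"
    using assms unfolding tensor_eigenpair_def tensor_formula by simp
  have vv: "v \<bullet> v = 1" using assms(2) by (simp add: power2_norm_eq_inner[symmetric])
  have "\<mu> = (\<mu> *\<^sub>R v) \<bullet> v" using vv by simp
  also have "\<dots> = (\<Sum>k\<in>UNIV. (v \<bullet> simplex_vec k) ^ (d - 1) * (simplex_vec k \<bullet> v))"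
    unfolding e[symmetric] inner_sum_left inner_scaleR_left ..
  also have "\<dots> = (\<Sum>k\<in>UNIV. (v \<bullet> simplex_vec k) ^ (d - 1) * (v \<bullet> simplex_vec k))"
    by (intro sum.cong refl arg_cong[where f="\<lambda>t. _ * t"] inner_commute)
  also have "\<dots> = (\<Sum>k\<in>UNIV. (v \<bullet> simplex_vec k) ^ d)"
    using assms(3) by (intro sum.cong refl power_minus_mult) simp
  finally show ?thesis .
qed


lemma odd_power_strict_mono:
  fixes a b :: real
  assumes "odd n" "a < b" shows "a ^ n < b ^ n"
proof -
  have n0: "n > 0" using assms(1) by (rule odd_pos)
  consider "0 \<le> a" | "b \<le> 0" | "a < 0" "0 < b" by linarith
  then show ?thesis
  proof cases
    case 1 then show ?thesis using assms n0 by (simp add: power_strict_mono)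
  next
    case 2
    then have "(- b) ^ n < (- a) ^ n" using assms n0 by (intro power_strict_mono) auto
    then show ?thesis using assms(1) by simp
  next
    case 3
    then have "a ^ n < 0" using assms(1) zero_le_odd_power[of n a] by linarith
    moreover have "0 < b ^ n" using 3 by simp
    ultimately show ?thesis by linarith
  qed
qed

lemma mvt_root:
  fixes A B x y :: real
  assumes "x < y" "A * x ^ m - B * x = A * y ^ m - B * y"
  shows "\<exists>z. x < z \<and> z < y \<and> A * real m * z ^ (m - 1) = B"
proof -
  have "\<And>t. DERIV (\<lambda>t. A * t ^ m - B * t) t :> A * (real m * t ^ (m - 1)) - B"
    by (auto intro!: derivative_eq_intros)
  from MVT2[OF assms(1) this] obtain z where z: "x < z" "z < y"
    "A * y ^ m - B * y - (A * x ^ m - B * x) = (y - x) * (A * (real m * z ^ (m - 1)) - B)" by blast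
  then have "(y - x) * (A * (real m * z ^ (m - 1)) - B) = 0" using assms(2) by simp
  then have "A * (real m * z ^ (m - 1)) - B = 0" using assms(1) by simp
  then show ?thesis using z by (intro exI[of _ z]) (simp add: algebra_simps)
qed

lemma roots_even:
  fixes A B x y z :: real
  assumes "even m" "m \<ge> 2" "A > 0" "x < y" "y < z"
    "A * x ^ m - B * x = A * y ^ m - B * y" "A * y ^ m - B * y = A * z ^ m - B * z"
  shows False
proof -
  obtain p where p: "x < p" "p < y" "A * real m * p ^ (m - 1) = B" using mvt_root[OF assms(4,6)] by blast
  obtain q where q: "y < q" "q < z" "A * real m * q ^ (m - 1) = B" using mvt_root[OF assms(5,7)] by blast
  have "odd (m - 1)" using assms(1,2) by simp
  then have "p ^ (m - 1) < q ^ (m - 1)" using p q by (intro odd_power_strict_mono) auto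
  then have "A * real m * p ^ (m - 1) < A * real m * q ^ (m - 1)" using assms(2,3) by simp
  then show False using p q by simp
qed

lemma roots_odd:
  fixes A B x y z w :: real
  assumes "odd m" "m \<ge> 3" "A > 0" "x < y" "y < z" "z < w"
    "A * x ^ m - B * x = A * y ^ m - B * y" "A * y ^ m - B * y = A * z ^ m - B * z"
    "A * z ^ m - B * z = A * w ^ m - B * w"
  shows False
proof -
  obtain p where p: "x < p" "p < y" "A * real m * p ^ (m - 1) = B" using mvt_root[OF assms(4,7)] by blast
  obtain q where q: "y < q" "q < z" "A * real m * q ^ (m - 1) = B" using mvt_root[OF assms(5,8)] by blast
  obtain r where r: "z < r" "r < w" "A * real m * r ^ (m - 1) = B" using mvt_root[OF assms(6,9)] by blast
  have m0: "real m > 0" using assms(1) odd_pos by auto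
  have e: "even (m - 1)" using assms(1) by simp
  have Am: "A * real m \<noteq> 0" using m0 assms(3) by simp
  have pq: "p ^ (m - 1) = q ^ (m - 1)" "q ^ (m - 1) = r ^ (m - 1)"
    using p(3) q(3) r(3) mult_left_cancel[OF Am] by metis+
  have "\<bar>p\<bar> ^ (m - 1) = \<bar>q\<bar> ^ (m - 1)" "\<bar>q\<bar> ^ (m - 1) = \<bar>r\<bar> ^ (m - 1)"
    using pq e by (simp_all add: power_even_abs)
  moreover have "m - 1 > 0" using assms(2) by simp
  ultimately have "\<bar>p\<bar> = \<bar>q\<bar>" "\<bar>q\<bar> = \<bar>r\<bar>"
    by (simp_all add: power_eq_iff_eq_base)
  then show False using p q r by linarith
qed


lemma sqrt_pow_powr: "X > 0 \<Longrightarrow> sqrt X ^ d = X powr (real d / 2)"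
proof -
  assume X: "X > 0"
  have "sqrt X ^ d = (X powr (1/2)) ^ d" using X by (simp add: powr_half_sqrt)
  also have "\<dots> = X powr (real d * (1/2))" using X by (simp add: powr_power)
  finally show ?thesis by simp
qed

lemma pow_N_sqrt:
  fixes N X :: real
  assumes "N > 0" "X > 0"
  shows "(N * sqrt (X / N)) ^ d = N powr (real d / 2) * X powr (real d / 2)"
proof -
  have "(N * sqrt (X / N)) ^ d = N ^ d * (X / N) powr (real d / 2)"
    using assms by (simp add: power_mult_distrib sqrt_pow_powr)
  also have "N ^ d = N powr (real d / 2) * N powr (real d / 2)"
    using assms by (simp add: powr_realpow[symmetric] powr_add[symmetric])
  also have "(X / N) powr (real d / 2) = X powr (real d / 2) / N powr (real d / 2)"
    by (rule powr_divide)
  finally show ?thesis using assms by simp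
qed

lemma mu_alg_a:
  fixes N k :: real
  assumes "N > 0" "0 < k" "k < N + 1" "d \<ge> 2"
  defines "nw \<equiv> sqrt (k * (N + 1 - k) / N)"
  shows "k * ((N + 1 - k) / (N * nw)) ^ d + (N + 1 - k) * (- k / (N * nw)) ^ d
       = ((N + 1 - k) ^ (d - 1) + (-1) ^ d * k ^ (d - 1)) /
         (N powr (real d / 2) * (k * (N + 1 - k)) powr (real d / 2 - 1))"
proof -
  define a where "a = N + 1 - k"
  have a0: "a > 0" using assms a_def by simp
  define D where "D = N powr (real d / 2) * (k * a) powr (real d / 2 - 1)"
  have D0: "D > 0" using assms a0 by (simp add: D_def)
  have "(N * nw) ^ d = N powr (real d / 2) * (k * a) powr (real d / 2)"
    unfolding nw_def a_def[symmetric] using assms a0 by (intro pow_N_sqrt) auto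
  also have "(k * a) powr (real d / 2) = (k * a) * (k * a) powr (real d / 2 - 1)"
    using a0 assms by (simp add: powr_mult_base)
  finally have e: "(N * nw) ^ d = D * (k * a)" by (simp add: D_def algebra_simps)
  have d1: "d = Suc (d - 1)" using assms by simp
  have pa: "a ^ d = a * a ^ (d - 1)" by (subst d1) simp
  have pk: "k ^ d = k * k ^ (d - 1)" by (subst d1) simp
  have "k * (a / (N * nw)) ^ d + a * (- k / (N * nw)) ^ d = (k * a ^ d + a * ((-1) ^ d * k ^ d)) / (N * nw) ^ d"
    by (simp add: power_divide add_divide_distrib power_minus[of "k / (N * nw)"])
  also have "\<dots> = (k * a) * (a ^ (d - 1) + (-1) ^ d * k ^ (d - 1)) / (D * (k * a))"
    unfolding e pa pk by (simp add: algebra_simps)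
  also have "\<dots> = (a ^ (d - 1) + (-1) ^ d * k ^ (d - 1)) / D"
    using a0 assms D0 by (simp add: field_simps)
  finally show ?thesis by (simp add: a_def D_def)
qed


lemma sum_if_UNIV: "(\<Sum>k\<in>(UNIV::'a::finite set). (if k \<in> K then f k else 0)) = (\<Sum>k\<in>K. f k)"
  by (simp add: sum.inter_restrict[symmetric])

lemma wK_comb: "(\<Sum>k\<in>K. simplex_vec k :: real^'n::finite) = (\<Sum>k\<in>UNIV. (if k \<in> K then 1 else 0) *\<^sub>R simplex_vec k)"
  by (subst sum_if_UNIV[symmetric]) (rule sum.cong, auto)

lemma sum_if_two:
  fixes p q :: real
  shows "(\<Sum>j\<in>(UNIV::'n::finite option set). (if j \<in> K then p else q))
     = real (card K) * p + (real CARD('n) + 1 - real (card K)) * q"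
proof -
  have c: "card K \<le> CARD('n) + 1" using card_mono[of "UNIV::'n option set" K] by (simp add: card_option)
  have "(\<Sum>j\<in>(UNIV::'n option set). (if j \<in> K then p else q)) = (\<Sum>j\<in>K. p) + (\<Sum>j\<in>-K. q)"
    by (simp add: sum.If_cases Compl_eq_Diff_UNIV)
  also have "\<dots> = real (card K) * p + real (card (-K)) * q" by simp
  also have "card (-K) = CARD('n) + 1 - card K" by (simp add: Compl_eq_Diff_UNIV card_Diff_subset card_option)
  finally show ?thesis using c by (simp add: of_nat_diff)
qed

lemma inner_wK:
  "(\<Sum>k\<in>K. simplex_vec k :: real^'n::finite) \<bullet> simplex_vec j
    = ((real CARD('n) + 1) * (if j \<in> K then 1 else 0) - real (card K)) / real CARD('n)"
  unfolding wK_comb inner_comb by (simp add: sum.If_cases)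

lemma norm_wK:
  "norm (\<Sum>k\<in>K. simplex_vec k :: real^'n::finite)
    = sqrt (real (card K) * (real CARD('n) + 1 - real (card K)) / real CARD('n))"
proof -
  have "norm (\<Sum>k\<in>K. simplex_vec k :: real^'n::finite) ^ 2
     = ((real CARD('n) + 1) * real (card K) - real (card K) ^ 2) / real CARD('n)"
  proof -
    have "(\<Sum>k\<in>UNIV. (if k \<in> K then 1 else 0::real) ^ 2) = (\<Sum>k\<in>UNIV. (if k \<in> K then 1 else 0::real))"
      by (rule sum.cong) auto
    then show ?thesis unfolding wK_comb norm2_comb by (simp add: sum.If_cases)
  qed
  also have "\<dots> = real (card K) * (real CARD('n) + 1 - real (card K)) / real CARD('n)"
    by (simp add: algebra_simps power2_eq_square)
  finally show ?thesis by (metis norm_ge_zero real_sqrt_unique)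
qed


lemma two_vals_eig:
  fixes v :: "real^'n::finite"
  assumes "v \<noteq> 0" "\<alpha> \<noteq> \<beta>" "\<And>j. v \<bullet> simplex_vec j = \<alpha> \<or> v \<bullet> simplex_vec j = \<beta>"
  shows "\<exists>\<mu>. tensor_eigenpair simplex_tensor d v \<mu>"
proof -
  define N where "N = real CARD('n)"
  have N0: "N > 0" by (simp add: N_def)
  define \<mu> where "\<mu> = (N + 1) * (\<alpha> ^ (d - 1) - \<beta> ^ (d - 1)) / (N * (\<alpha> - \<beta>))"
  have key: "(N + 1) * \<beta> ^ (d - 1) - N * \<mu> * \<beta> = (N + 1) * \<alpha> ^ (d - 1) - N * \<mu> * \<alpha>"
  proof -
    have "N * \<mu> * (\<alpha> - \<beta>) = (N + 1) * (\<alpha> ^ (d - 1) - \<beta> ^ (d - 1))"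
      using assms(2) N0 by (simp add: \<mu>_def)
    then show ?thesis by (simp add: algebra_simps)
  qed
  have "tensor_eigenpair simplex_tensor d v \<mu>"
  proof (rule eig_intro[OF assms(1)])
    fix j
    show "(real CARD('n) + 1) * (v \<bullet> simplex_vec j) ^ (d - 1) - real CARD('n) * \<mu> * (v \<bullet> simplex_vec j)
        = (N + 1) * \<alpha> ^ (d - 1) - N * \<mu> * \<alpha>"
      using assms(3)[of j] key unfolding N_def by auto
  qed
  then show ?thesis by blast
qed

lemma mu_a:
  fixes K :: "'n::finite option set"
  assumes "K \<noteq> {}" "card K \<le> CARD('n)" "d \<ge> 2"
  defines "w \<equiv> (\<Sum>k\<in>K. simplex_vec k :: real^'n)"
  shows "norm (inverse (norm w) *\<^sub>R w) = 1"
    "tensor_eigenpair simplex_tensor d (inverse (norm w) *\<^sub>R w)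
      (((real CARD('n) + 1 - real (card K)) ^ (d - 1) + (-1) ^ d * real (card K) ^ (d - 1)) /
         (real CARD('n) powr (real d / 2) * (real (card K) * (real CARD('n) + 1 - real (card K))) powr (real d / 2 - 1)))"
proof -
  define N where "N = real CARD('n)"
  define k where "k = real (card K)"
  have N0: "N > 0" by (simp add: N_def)
  have fin: "finite K" by simp
  have k0: "k > 0" using assms(1) fin by (simp add: k_def card_gt_0_iff)
  have kN: "k < N + 1" using assms(2) by (simp add: k_def N_def)
  define nw where "nw = sqrt (k * (N + 1 - k) / N)"
  have nw: "norm w = nw" unfolding w_def norm_wK nw_def k_def N_def ..
  have nw0: "nw > 0" unfolding nw_def using N0 k0 kN by simp
  define v where "v = inverse (norm w) *\<^sub>R w"
  show nv: "norm (inverse (norm w) *\<^sub>R w) = 1" using nw nw0 by simp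
  have wj: "w \<bullet> simplex_vec j = ((N + 1) * (if j \<in> K then 1 else 0) - k) / N" for j
    unfolding w_def inner_wK N_def k_def ..
  have x: "v \<bullet> simplex_vec j = (if j \<in> K then (N + 1 - k) / (N * nw) else - k / (N * nw))" for j
  proof -
    have "w \<bullet> simplex_vec j = (if j \<in> K then (N + 1 - k) / N else - k / N)"
      using wj[of j] N0 by (auto simp: field_simps)
    then show ?thesis using nw0 N0 by (simp add: v_def nw field_simps)
  qed
  have v0: "v \<noteq> 0" using nv v_def by auto
  have ne: "(N + 1 - k) / (N * nw) \<noteq> - k / (N * nw)" using nw0 N0 by (simp add: field_simps) (metis add_pos_pos mult_pos_pos less_irrefl)
  have xs: "v \<bullet> simplex_vec j = (N + 1 - k) / (N * nw) \<or> v \<bullet> simplex_vec j = - k / (N * nw)" for j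
    using x[of j] by (cases "j \<in> K") auto
  obtain \<mu> where e: "tensor_eigenpair simplex_tensor d v \<mu>"
    using two_vals_eig[OF v0 ne xs] by blast
  have "\<mu> = (\<Sum>j\<in>UNIV. (v \<bullet> simplex_vec j) ^ d)"
    using eig_mu[OF e] nv assms(3) v_def by simp
  also have "\<dots> = (\<Sum>j\<in>UNIV. (if j \<in> K then ((N + 1 - k) / (N * nw)) ^ d else (- k / (N * nw)) ^ d))"
    by (rule sum.cong) (auto simp: x)
  also have "\<dots> = k * ((N + 1 - k) / (N * nw)) ^ d + (N + 1 - k) * (- k / (N * nw)) ^ d"
    by (simp add: sum_if_two N_def k_def)
  also have "\<dots> = ((N + 1 - k) ^ (d - 1) + (-1) ^ d * k ^ (d - 1)) /
         (N powr (real d / 2) * (k * (N + 1 - k)) powr (real d / 2 - 1))"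
    unfolding nw_def using N0 k0 kN assms(3) by (rule mu_alg_a)
  finally show "tensor_eigenpair simplex_tensor d (inverse (norm w) *\<^sub>R w)
      (((real CARD('n) + 1 - real (card K)) ^ (d - 1) + (-1) ^ d * real (card K) ^ (d - 1)) /
         (real CARD('n) powr (real d / 2) * (real (card K) * (real CARD('n) + 1 - real (card K))) powr (real d / 2 - 1)))"
    using e by (simp add: v_def N_def k_def)
qed


lemma rep_two:
  fixes v :: "real^'n::finite"
  assumes nv: "norm v = 1" and ab: "\<beta> < \<alpha>" and xs: "\<And>j. v \<bullet> simplex_vec j = \<alpha> \<or> v \<bullet> simplex_vec j = \<beta>"
  defines "K \<equiv> {j. v \<bullet> simplex_vec j = \<alpha>}"
  shows "K \<noteq> {}" "card K \<le> CARD('n)" "v = inverse (norm (\<Sum>k\<in>K. simplex_vec k)) *\<^sub>R (\<Sum>k\<in>K. simplex_vec k)"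
proof -
  define N where "N = real CARD('n)"
  define k where "k = real (card K)"
  have N0: "N > 0" by (simp add: N_def)
  have x: "v \<bullet> simplex_vec j = (if j \<in> K then \<alpha> else \<beta>)" for j
    using xs[of j] ab by (auto simp: K_def)
  have "0 = (\<Sum>j\<in>UNIV. v \<bullet> simplex_vec j)" by (simp add: sum_x_zero)
  also have "\<dots> = (\<Sum>j\<in>UNIV. (if j \<in> K then \<alpha> else \<beta>))" by (simp add: x)
  also have "\<dots> = k * \<alpha> + (N + 1 - k) * \<beta>" by (simp add: sum_if_two k_def N_def)
  finally have sumeq: "k * \<alpha> + (N + 1 - k) * \<beta> = 0" by simp
  have v0: "v \<noteq> 0" using nv by auto
  obtain j0 where j0: "v \<bullet> simplex_vec j0 \<noteq> 0" using x_nonzero[OF v0] by blast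
  show Kne: "K \<noteq> {}"
  proof
    assume "K = {}"
    then have "k = 0" by (simp add: k_def)
    then have "\<beta> = 0" using sumeq N0 by simp
    then show False using j0 x[of j0] \<open>K = {}\<close> by simp
  qed
  have KU: "K \<noteq> UNIV"
  proof
    assume "K = UNIV"
    then have "k = N + 1" by (simp add: k_def N_def card_option)
    then have "\<alpha> = 0" using sumeq N0 by (simp add: add_nonneg_eq_0_iff)
    then show False using j0 x[of j0] \<open>K = UNIV\<close> by simp
  qed
  have "card K < card (UNIV :: 'n option set)" using KU by (intro psubset_card_mono) auto
  then show cK: "card K \<le> CARD('n)" by (simp add: card_option)
  have k0: "k > 0" using Kne by (simp add: k_def card_gt_0_iff)
  have kN: "N + 1 - k > 0" using cK by (simp add: k_def N_def)
  have a0: "\<alpha> > 0"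
  proof (rule ccontr)
    assume "\<not> \<alpha> > 0"
    then have "k * \<alpha> \<le> 0" "(N + 1 - k) * \<beta> < 0" using k0 kN ab
      by (auto simp: mult_nonneg_nonpos mult_pos_neg)
    then show False using sumeq by simp
  qed
  define w where "w = (\<Sum>k\<in>K. simplex_vec k :: real^'n)"
  define t where "t = N * \<alpha> / (N + 1 - k)"
  have t0: "t > 0" using a0 N0 kN by (simp add: t_def)
  have wj: "w \<bullet> simplex_vec j = ((N + 1) * (if j \<in> K then 1 else 0) - k) / N" for j
    unfolding w_def inner_wK N_def k_def ..
  have vt: "v = t *\<^sub>R w"
  proof (rule inner_determines)
    fix j
    show "v \<bullet> simplex_vec j = (t *\<^sub>R w) \<bullet> simplex_vec j"
    proof (cases "j \<in> K")
      case True
      have "(t *\<^sub>R w) \<bullet> simplex_vec j = N * \<alpha> / (N + 1 - k) * ((N + 1 - k) / N)"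
        using True by (simp add: wj t_def)
      also have "\<dots> = \<alpha>" using N0 kN by simp
      finally show ?thesis using True by (simp add: x)
    next
      case False
      have "\<beta> = - k * \<alpha> / (N + 1 - k)" using sumeq kN by (simp add: field_simps)
      then show ?thesis using False N0 kN by (simp add: x wj t_def field_simps)
    qed
  qed
  have "norm v = t * norm w" using vt t0 by simp
  then have "t * norm w = 1" using nv by simp
  then have "inverse (norm w) = t" by (metis inverse_unique mult.commute)
  then show "v = inverse (norm (\<Sum>k\<in>K. simplex_vec k)) *\<^sub>R (\<Sum>k\<in>K. simplex_vec k)"
    using vt by (simp add: w_def)
qed

definition RR :: "nat \<Rightarrow> real \<Rightarrow> real" where
  "RR m u = (real m - 1) * u ^ m + real m * u ^ (m - 1) - 1"

lemma RR_m1: "odd m \<Longrightarrow> m \<ge> 3 \<Longrightarrow> RR m (-1) = 0"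
  by (simp add: RR_def)

lemma RR_mono_pos:
  assumes "m \<ge> 3" "0 \<le> u" "u < v" shows "RR m u < RR m v"
proof -
  have "u ^ m \<le> v ^ m" using assms by (intro power_mono) auto
  then have "(real m - 1) * u ^ m \<le> (real m - 1) * v ^ m" using assms(1) by (intro mult_left_mono) auto
  moreover have "u ^ (m - 1) < v ^ (m - 1)" using assms by (intro power_strict_mono) auto
  then have "real m * u ^ (m - 1) < real m * v ^ (m - 1)" using assms(1) by simp
  ultimately show ?thesis by (simp add: RR_def)
qed

lemma RR_neg_left:
  assumes "odd m" "m \<ge> 3" "-1 < u" "u \<le> 0" shows "RR m u < 0"
proof -
  have der: "DERIV (RR m) z :> real m * (real m - 1) * z ^ (m - 2) * (z + 1)" for z
  proof -
    have "DERIV (RR m) z :> (real m - 1) * (real m * z ^ (m - 1)) + real m * (real (m - 1) * z ^ (m - 1 - 1))"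
      unfolding RR_def by (auto intro!: derivative_eq_intros)
    moreover have "z ^ (m - 1) = z ^ (m - 2) * z"
    proof -
      have e: "m - 1 = Suc (m - 2)" using assms(2) by simp
      show ?thesis by (simp only: e power_Suc2)
    qed
    moreover have "real (m - 1) = real m - 1" using assms(2) by simp
    moreover have "m - 1 - 1 = m - 2" by simp
    ultimately show ?thesis by (simp add: algebra_simps)
  qed
  have "RR m u < RR m (-1)"
  proof (rule DERIV_neg_imp_decreasing_open[of "-1" u "RR m"])
    show "-1 < u" by fact
    fix z assume z: "-1 < z" "z < u"
    have "odd (m - 2)" using assms by (simp add: even_diff_nat)
    then have "z ^ (m - 2) < 0" using z assms(4) zero_le_odd_power[of "m - 2" z] by linarith
    moreover have "real m * (real m - 1) > 0" "z + 1 > 0" using assms(2) z by auto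
    ultimately have "real m * (real m - 1) * z ^ (m - 2) * (z + 1) < 0"
      by (simp add: mult_pos_neg mult_neg_pos)
    then show "\<exists>y. DERIV (RR m) z :> y \<and> y < 0" using der by blast
  next
    show "continuous_on {-1..u} (RR m)" unfolding RR_def by (intro continuous_intros)
  qed
  then show ?thesis using RR_m1[OF assms(1,2)] by simp
qed

lemma pow_bound:
  fixes n :: real
  assumes "n \<ge> 2" "m \<ge> 3"
  shows "n ^ m \<ge> real m * (n + 1) - 1"
  using assms(2)
proof (induction m rule: nat_induct_at_least)
  case base
  have "n ^ 3 - (3 * (n + 1) - 1) = (n - 2) * (n + 1) ^ 2" by (simp add: algebra_simps power2_eq_square power3_eq_cube)
  moreover have "(n - 2) * (n + 1) ^ 2 \<ge> 0" using assms(1) by simp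
  ultimately show ?case by simp
next
  case (Suc m)
  have "n ^ Suc m = n * n ^ m" by simp
  also have "\<dots> \<ge> n * (real m * (n + 1) - 1)" using Suc assms(1) by (intro mult_left_mono) auto
  finally have h: "n ^ Suc m \<ge> n * (real m * (n + 1) - 1)" .
  have eq: "n * (real m * (n + 1) - 1) - (real (Suc m) * (n + 1) - 1) = (n - 1) * (real m * (n + 1) - 1) - n - 1"
    by (simp add: algebra_simps)
  have "(n - 1) * (real m * (n + 1) - 1) \<ge> 1 * (3 * (n + 1) - 1)"
  proof (rule mult_mono)
    show "real m * (n + 1) - 1 \<ge> 3 * (n + 1) - 1" using Suc assms(1) by (intro diff_right_mono mult_right_mono) auto
  qed (use assms(1) Suc in auto)
  moreover have gen: "\<And>P::real. P \<ge> 1 * (3 * (n + 1) - 1) \<Longrightarrow> n \<ge> 2 \<Longrightarrow> 0 \<le> P - n - 1" by simp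
  ultimately have "(n - 1) * (real m * (n + 1) - 1) - n - 1 \<ge> 0" using assms(1) by blast
  then have "n * (real m * (n + 1) - 1) - (real (Suc m) * (n + 1) - 1) \<ge> 0" by (simp only: eq)
  then show ?case using h by linarith
qed

lemma RR_at_inv:
  fixes n :: real
  assumes "n \<ge> 2" "m \<ge> 3"
  shows "RR m (1 / n) \<le> 0"
proof -
  have n0: "n > 0" using assms by simp
  have m1: "m = Suc (m - 1)" using assms by simp
  have "RR m (1 / n) = ((real m - 1) + real m * n - n ^ m) / n ^ m"
  proof -
    have "n ^ m = n * n ^ (m - 1)" by (subst m1) simp
    then show ?thesis using n0 by (simp add: RR_def power_one_over field_simps)
  qed
  moreover have "(real m - 1) + real m * n - n ^ m \<le> 0" using pow_bound[OF assms] by (simp add: algebra_simps)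
  ultimately show ?thesis using n0 by (simp add: divide_nonpos_pos)
qed


lemma g_fun_even: "even d \<Longrightarrow> d \<ge> 1 \<Longrightarrow> g_fun n d t = ((real n + 1) * t - 1) ^ (d - 1) + 1"
  by (simp add: g_fun_def)

lemma p_deriv:
  fixes M z :: real
  assumes "m \<ge> 1" "z \<noteq> 0"
  shows "DERIV (\<lambda>t. ((M * t - 1) ^ m + 1) / t) z :> RR m (M * z - 1) / z ^ 2"
proof -
  have d: "DERIV (\<lambda>t. ((M * t - 1) ^ m + 1) / t) z :>
      ((real m * (M * z - 1) ^ (m - 1) * M) * z - ((M * z - 1) ^ m + 1)) / (z * z)"
    using assms(2) by (auto intro!: derivative_eq_intros simp: algebra_simps)
  have m1: "m = Suc (m - 1)" using assms(1) by simp
  have pw: "(M * z - 1) ^ m = (M * z - 1) ^ (m - 1) * (M * z - 1)" by (subst m1) (simp only: power_Suc2)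
  have "(real m * (M * z - 1) ^ (m - 1) * M) * z - ((M * z - 1) ^ m + 1) = RR m (M * z - 1)"
    unfolding RR_def pw by (simp add: algebra_simps)
  then show ?thesis using d by (simp add: power2_eq_square)
qed


lemma s0_exists:
  fixes n d :: nat
  assumes n2: "n \<ge> 2" and ev: "even d" and d4: "d \<ge> 4"
  defines "p \<equiv> (\<lambda>t. g_fun n d t / t)"
  shows "\<exists>s0. 1 / real n \<le> s0 \<and> s0 < 2 / (real n + 1) \<and>
      strict_antimono_on {0<..s0} p \<and> strict_mono_on {s0..} p"
proof -
  define m where "m = d - 1"
  define M where "M = real n + 1"
  have m3: "m \<ge> 3" and om: "odd m" using d4 ev by (auto simp: m_def)
  have M0: "M > 0" by (simp add: M_def)
  have p_eq: "p t = ((M * t - 1) ^ m + 1) / t" for t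
    using ev d4 by (simp add: p_def g_fun_even M_def m_def)
  have rn: "real n \<ge> 2" using n2 by simp
  have cont: "continuous_on {1 / real n..1} (RR m)" unfolding RR_def by (intro continuous_intros)
  obtain u0 where u0: "1 / real n \<le> u0" "u0 \<le> 1" "RR m u0 = 0"
    using IVT'[of "RR m" "1 / real n" 0 1, OF RR_at_inv[OF rn m3] _ _ cont] rn m3
    by (auto simp: RR_def)
  have "1 / real n > 0" using rn by simp
  then have u0pos: "u0 > 0" using u0(1) by linarith
  have u0lt: "u0 < 1"
  proof -
    have "RR m 1 = 2 * real m - 2" by (simp add: RR_def)
    then have "RR m 1 > 0" using m3 by simp
    then show ?thesis using u0 by (metis less_eq_real_def less_irrefl)
  qed
  have neg: "RR m u < 0" if "-1 < u" "u < u0" for u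
  proof (cases "u \<le> 0")
    case True then show ?thesis using RR_neg_left[OF om m3 that(1)] by simp
  next
    case False then show ?thesis using RR_mono_pos[OF m3 _ that(2)] u0(3) by simp
  qed
  have pos: "RR m u > 0" if "u0 < u" for u
    using RR_mono_pos[OF m3 _ that] u0(3) u0pos by simp
  define s0 where "s0 = (u0 + 1) / M"
  have s0pos: "s0 > 0" using u0pos M0 by (simp add: s0_def)
  have der: "DERIV p z :> RR m (M * z - 1) / z ^ 2" if "z \<noteq> 0" for z
  proof -
    have "p = (\<lambda>t. ((M * t - 1) ^ m + 1) / t)" using p_eq by (intro ext) simp
    then show ?thesis using p_deriv[of m z M] that m3 by simp
  qed
  have contp: "continuous_on {x..y} p" if "0 < x" for x y
  proof -
    have "continuous_on {x..y} (\<lambda>t. ((M * t - 1) ^ m + 1) / t)"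
      using that by (intro continuous_intros) auto
    moreover have "p = (\<lambda>t. ((M * t - 1) ^ m + 1) / t)" using p_eq by (intro ext) simp
    ultimately show ?thesis by simp
  qed
  have Ms0: "M * s0 - 1 = u0" using M0 by (simp add: s0_def)
  show ?thesis
  proof (intro exI[of _ s0] conjI)
    show "1 / real n \<le> s0"
    proof -
      have rpos: "real n > 0" using rn by simp
      have nz: "real n + real n * real n \<noteq> 0" using rpos by (metis add_pos_pos mult_pos_pos less_irrefl)
      have "1 / real n = (1 / real n + 1) / M" using rpos nz by (simp add: M_def field_simps)
      also have "\<dots> \<le> s0" unfolding s0_def using u0(1) M0 by (simp add: divide_right_mono)
      finally show ?thesis .
    qed
    show "s0 < 2 / (real n + 1)" unfolding s0_def M_def[symmetric] using u0lt M0
      by (simp add: divide_strict_right_mono)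
    show "strict_antimono_on {0<..s0} p"
    proof (rule monotone_onI)
      fix x y assume xy: "x \<in> {0<..s0}" "y \<in> {0<..s0}" "x < y"
      show "p y < p x"
      proof (rule DERIV_neg_imp_decreasing_open[OF xy(3)])
        fix z assume z: "x < z" "z < y"
        have "M * z - 1 > -1" using z xy M0 by simp
        moreover have "M * z - 1 < u0"
        proof -
          have "y \<le> s0" using xy(2) by simp
          then have "z < s0" using z(2) by linarith
          then have "M * z < M * s0" using M0 by (rule mult_strict_left_mono)
          then show ?thesis using Ms0 by linarith
        qed
        ultimately have "RR m (M * z - 1) / z ^ 2 < 0" using neg z xy by (simp add: divide_neg_pos)
        then show "\<exists>y. DERIV p z :> y \<and> y < 0" using der[of z] z xy by auto
      next
        show "continuous_on {x..y} p" using contp xy by simp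
      qed
    qed
    show "strict_mono_on {s0..} p"
    proof (rule monotone_onI)
      fix x y assume xy: "x \<in> {s0..}" "y \<in> {s0..}" "x < y"
      show "p x < p y"
      proof (rule DERIV_pos_imp_increasing_open[OF xy(3)])
        fix z assume z: "x < z" "z < y"
        have "s0 \<le> x" using xy(1) by simp
        then have "s0 < z" using z(1) by linarith
        then have "M * s0 < M * z" using M0 by (rule mult_strict_left_mono)
        then have "M * z - 1 > u0" using Ms0 by linarith
        then have "RR m (M * z - 1) / z ^ 2 > 0" using pos z xy s0pos by simp
        then show "\<exists>y. DERIV p z :> y \<and> y > 0" using der[of z] z xy s0pos by auto
      next
        show "continuous_on {x..y} p" using contp xy s0pos by simp
      qed
    qed
  qed
qed


lemma s_star_props:
  fixes n d :: nat
  assumes n2: "n \<ge> 2" and ev: "even d" and d4: "d \<ge> 4"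
  defines "p \<equiv> (\<lambda>t. g_fun n d t / t)"
  shows "1 / real n \<le> s_star n d \<and> s_star n d < 2 / (real n + 1) \<and>
      strict_antimono_on {0<..s_star n d} p \<and> strict_mono_on {s_star n d..} p"
proof -
  let ?P = "\<lambda>s. 1 / real n \<le> s \<and> s < 2 / (real n + 1) \<and>
      strict_antimono_on {0<..s} p \<and> strict_mono_on {s..} p"
  have uniq: "s1 = s2" if h1: "?P s1" and h2: "?P s2" for s1 s2
  proof -
    have pos: "1 / real n > 0" using n2 by simp
    have noless: False if a: "?P a" and b: "?P b" and ab: "a < b" for a b
    proof -
      have "1 / real n \<le> a" using a by simp
      then have a0: "0 < a" using pos by linarith
      have "a \<in> {0<..b}" "b \<in> {0<..b}" using a0 ab by auto
      then have "p b < p a" using b ab by (auto simp: monotone_on_def)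
      moreover have "a \<in> {a..}" "b \<in> {a..}" using ab by auto
      then have "p a < p b" using a ab by (auto simp: monotone_on_def)
      ultimately show False by simp
    qed
    show ?thesis using noless[OF h1 h2] noless[OF h2 h1] by (meson linorder_neqE_linordered_idom)
  qed
  obtain s0 where "?P s0" using s0_exists[OF n2 ev d4] unfolding p_def by blast
  then have "\<exists>!s. ?P s" using uniq by blast
  then have "?P (THE s. ?P s)" by (rule theI')
  then show ?thesis unfolding s_star_def p_def .
qed

lemma sum_if_three:
  fixes p q r :: real and K1 K2 :: "'n::finite option set"
  assumes "K1 \<inter> K2 = {}"
  shows "(\<Sum>j\<in>UNIV. (if j \<in> K1 then p else if j \<in> K2 then q else r))
     = real (card K1) * p + real (card K2) * q + (real CARD('n) + 1 - real (card K1) - real (card K2)) * r"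
proof -
  have "\<And>j. (if j \<in> K1 then p else if j \<in> K2 then q else r)
      = (if j \<in> K1 then p - r else 0) + ((if j \<in> K2 then q - r else 0) + r)"
    using assms by auto
  then have "(\<Sum>j\<in>UNIV. (if j \<in> K1 then p else if j \<in> K2 then q else r))
      = (\<Sum>j\<in>UNIV. (if j \<in> K1 then p - r else 0)) + ((\<Sum>j\<in>UNIV. (if j \<in> K2 then q - r else 0)) + (\<Sum>j\<in>(UNIV::'n option set). r))"
    by (simp add: sum.distrib)
  also have "\<dots> = real (card K1) * (p - r) + (real (card K2) * (q - r) + (real CARD('n) + 1) * r)"
    by (simp add: sum_if_UNIV card_option)
  finally show ?thesis by (simp add: algebra_simps)
qed

lemma comb_b:
  fixes K1 K2 :: "'n::finite option set"
  assumes "K1 \<inter> K2 = {}"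
  shows "a *\<^sub>R (\<Sum>k\<in>K1. simplex_vec k) + b *\<^sub>R (\<Sum>k\<in>K2. simplex_vec k)
    = (\<Sum>k\<in>UNIV. (if k \<in> K1 then a else if k \<in> K2 then b else 0) *\<^sub>R (simplex_vec k :: real^'n))"
proof -
  have "\<And>k. (if k \<in> K1 then a else if k \<in> K2 then b else 0) *\<^sub>R (simplex_vec k :: real^'n)
     = (if k \<in> K1 then a *\<^sub>R simplex_vec k else 0) + (if k \<in> K2 then b *\<^sub>R simplex_vec k else 0)"
    using assms by auto
  then show ?thesis
    by (simp add: sum.distrib sum_if_UNIV scaleR_sum_right)
qed

lemma xb:
  fixes K1 K2 :: "'n::finite option set" and v :: "real^'n" and a b :: real
  defines "N \<equiv> real CARD('n)"
  defines "Q \<equiv> (N + 1) * a\<^sup>2 * real (card K1) + (N + 1) * b\<^sup>2 * real (card K2) - 1"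
  defines "sb \<equiv> (\<lambda>k. if k \<in> K1 then a else if k \<in> K2 then b else 0)"
  assumes dis: "K1 \<inter> K2 = {}" and s1: "real (card K1) * a + real (card K2) * b = 1"
    and vdef: "v = inverse (sqrt (Q / N)) *\<^sub>R (a *\<^sub>R (\<Sum>k\<in>K1. simplex_vec k) + b *\<^sub>R (\<Sum>k\<in>K2. simplex_vec k))"
    and nv: "norm v = 1"
  shows "Q > 0" "v \<bullet> simplex_vec j = ((N + 1) * sb j - 1) / (N * sqrt (Q / N))"
proof -
  have N0: "N > 0" by (simp add: N_def)
  define w where "w = (\<Sum>k\<in>UNIV. sb k *\<^sub>R (simplex_vec k :: real^'n))"
  have vw: "v = inverse (sqrt (Q / N)) *\<^sub>R w" using vdef comb_b[OF dis, of a b] by (simp add: w_def sb_def)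
  have ssum: "(\<Sum>k\<in>UNIV. sb k) = 1"
    using sum_if_three[OF dis, of a b 0] s1 by (simp add: sb_def)
  have ssq: "(\<Sum>k\<in>UNIV. sb k ^ 2) = real (card K1) * a\<^sup>2 + real (card K2) * b\<^sup>2"
  proof -
    have "(\<Sum>k\<in>UNIV. sb k ^ 2) = (\<Sum>k\<in>UNIV. (if k \<in> K1 then a\<^sup>2 else if k \<in> K2 then b\<^sup>2 else 0))"
      by (rule sum.cong) (auto simp: sb_def)
    then show ?thesis using sum_if_three[OF dis, of "a\<^sup>2" "b\<^sup>2" 0] by simp
  qed
  have nw2: "norm w ^ 2 = Q / N"
    unfolding w_def norm2_comb ssum ssq N_def[symmetric] Q_def by (simp add: algebra_simps)
  have c0: "sqrt (Q / N) \<noteq> 0"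
  proof
    assume "sqrt (Q / N) = 0"
    then have "v = 0" using vw by simp
    then show False using nv by simp
  qed
  have "Q / N \<ge> 0" using nw2[symmetric] by simp
  then have "Q / N > 0" using c0 by (metis less_eq_real_def real_sqrt_zero)
  then show "Q > 0" using N0 by (simp add: zero_less_divide_iff)
  have "w \<bullet> simplex_vec j = ((N + 1) * sb j - 1) / N"
    unfolding w_def inner_comb ssum N_def ..
  then show "v \<bullet> simplex_vec j = ((N + 1) * sb j - 1) / (N * sqrt (Q / N))"
    using vw by (simp add: divide_inverse)
qed


lemma mu_b_val:
  fixes K1 K2 :: "'n::finite option set" and v :: "real^'n" and a b :: real
  defines "N \<equiv> real CARD('n)"
  defines "Q \<equiv> (N + 1) * a\<^sup>2 * real (card K1) + (N + 1) * b\<^sup>2 * real (card K2) - 1"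
  assumes dis: "K1 \<inter> K2 = {}" and s1: "real (card K1) * a + real (card K2) * b = 1"
    and vdef: "v = inverse (sqrt (Q / N)) *\<^sub>R (a *\<^sub>R (\<Sum>k\<in>K1. simplex_vec k) + b *\<^sub>R (\<Sum>k\<in>K2. simplex_vec k))"
    and nv: "norm v = 1" and ev: "even d"
  shows "(\<Sum>j\<in>UNIV. (v \<bullet> simplex_vec j) ^ d)
     = (real (card K1) * ((N + 1) * a - 1) ^ d + real (card K2) * ((N + 1) * b - 1) ^ d
        + N + 1 - real (card K1) - real (card K2)) / (N powr (real d / 2) * Q powr (real d / 2))"
proof -
  define sb where "sb = (\<lambda>k. if k \<in> K1 then a else if k \<in> K2 then b else 0)"
  note x = xb[OF dis s1 vdef[unfolded Q_def N_def] nv, folded N_def Q_def sb_def]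
  have N0: "N > 0" by (simp add: N_def)
  have Q0: "Q > 0" using x(1) by (simp add: Q_def)
  define C where "C = N * sqrt (Q / N)"
  have C: "C ^ d = N powr (real d / 2) * Q powr (real d / 2)"
    unfolding C_def using N0 Q0 by (rule pow_N_sqrt)
  have C0: "C ^ d \<noteq> 0" "C \<noteq> 0" using N0 Q0 by (simp_all add: C_def)
  have x2: "v \<bullet> simplex_vec j = ((N + 1) * sb j - 1) / C" for j
    using x(2)[of j] by (simp add: C_def Q_def sb_def)
  have "(\<Sum>j\<in>UNIV. (v \<bullet> simplex_vec j) ^ d)
      = (\<Sum>j\<in>UNIV. (if j \<in> K1 then ((N + 1) * a - 1) ^ d / C ^ d else
           if j \<in> K2 then ((N + 1) * b - 1) ^ d / C ^ d else 1 / C ^ d))"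
    by (rule sum.cong) (auto simp: x2 sb_def power_divide ev)
  also have "\<dots> = (real (card K1) * ((N + 1) * a - 1) ^ d + real (card K2) * ((N + 1) * b - 1) ^ d
        + N + 1 - real (card K1) - real (card K2)) / C ^ d"
    unfolding sum_if_three[OF dis] N_def[symmetric] using C0 by (simp add: field_simps)
  finally show ?thesis unfolding C .
qed

lemma eig_b:
  fixes K1 K2 :: "'n::finite option set" and v :: "real^'n" and a b :: real
  defines "N \<equiv> real CARD('n)"
  defines "Q \<equiv> (N + 1) * a\<^sup>2 * real (card K1) + (N + 1) * b\<^sup>2 * real (card K2) - 1"
  assumes dis: "K1 \<inter> K2 = {}" and s1: "real (card K1) * a + real (card K2) * b = 1"
    and vdef: "v = inverse (sqrt (Q / N)) *\<^sub>R (a *\<^sub>R (\<Sum>k\<in>K1. simplex_vec k) + b *\<^sub>R (\<Sum>k\<in>K2. simplex_vec k))"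
    and nv: "norm v = 1" and d1: "d \<ge> 2"
    and a0: "a > 0" and b0: "b > 0" and gab: "g_fun CARD('n) d a / a = g_fun CARD('n) d b / b"
  shows "\<exists>\<mu>. tensor_eigenpair simplex_tensor d v \<mu>"
proof -
  define sb where "sb = (\<lambda>k. if k \<in> K1 then a else if k \<in> K2 then b else 0)"
  note x = xb[OF dis s1 vdef[unfolded Q_def N_def] nv, folded N_def Q_def sb_def]
  have N0: "N > 0" by (simp add: N_def)
  define m where "m = d - 1"
  define t where "t = 1 / (N * sqrt (Q / N))"
  have Q0: "Q > 0" using x(1) by (simp add: Q_def)
  have t0: "t > 0" using N0 Q0 by (simp add: t_def)
  define G where "G = g_fun CARD('n) d a / a"
  define \<mu> where "\<mu> = t ^ (m - 1) * G / N"
  have "0 < m" using d1 by (simp add: m_def)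
  then have tm: "t ^ (m - 1) * t = t ^ m" by (rule power_minus_mult)
  have key: "(N + 1) * (t * ((N + 1) * s - 1)) ^ m - N * \<mu> * (t * ((N + 1) * s - 1))
      = (N + 1) * (- t) ^ m - N * \<mu> * (- t)" if s: "s = 0 \<or> (s > 0 \<and> g_fun CARD('n) d s = G * s)" for s
  proof (cases "s = 0")
    case True then show ?thesis by simp
  next
    case False
    then have gs: "((N + 1) * s - 1) ^ m - (-1) ^ m = G * s" using s by (simp add: g_fun_def m_def N_def)
    have "(N + 1) * (t * ((N + 1) * s - 1)) ^ m - N * \<mu> * (t * ((N + 1) * s - 1))
        - ((N + 1) * (- t) ^ m - N * \<mu> * (- t))
       = (N + 1) * t ^ m * (((N + 1) * s - 1) ^ m - (-1) ^ m) - N * \<mu> * t * ((N + 1) * s)"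
    proof -
      have p1: "(t * ((N + 1) * s - 1)) ^ m = t ^ m * ((N + 1) * s - 1) ^ m" by (rule power_mult_distrib)
      have p2: "(- t) ^ m = (-1) ^ m * t ^ m" by (rule power_minus)
      show ?thesis unfolding p1 p2 by (simp add: algebra_simps)
    qed
    also have "N * \<mu> * t = t ^ m * G" using N0 tm by (simp add: \<mu>_def algebra_simps)
    also have "(N + 1) * t ^ m * (((N + 1) * s - 1) ^ m - (-1) ^ m) - t ^ m * G * ((N + 1) * s) = 0"
      unfolding gs by (simp add: algebra_simps)
    finally show ?thesis by simp
  qed
  have v0: "v \<noteq> 0" using nv by auto
  have "tensor_eigenpair simplex_tensor d v \<mu>"
  proof (rule eig_intro[OF v0])
    fix j
    have xj: "v \<bullet> simplex_vec j = t * ((N + 1) * sb j - 1)" using x(2)[of j] by (simp add: t_def Q_def sb_def)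
    have "sb j = 0 \<or> (sb j > 0 \<and> g_fun CARD('n) d (sb j) = G * sb j)"
    proof -
      have ga: "g_fun CARD('n) d a = G * a" using a0 by (simp add: G_def)
      have gb: "g_fun CARD('n) d b = G * b" using b0 gab by (simp add: G_def)
      show ?thesis using a0 b0 ga gb by (auto simp: sb_def)
    qed
    from key[OF this]
    show "(real CARD('n) + 1) * (v \<bullet> simplex_vec j) ^ (d - 1) - real CARD('n) * \<mu> * (v \<bullet> simplex_vec j)
        = (N + 1) * (- t) ^ m - N * \<mu> * (- t)"
      unfolding xj by (simp add: N_def m_def)
  qed
  then show ?thesis by blast
qed

lemma w_b_facts:
  fixes K1 K2 :: "'n::finite option set" and a b :: real
  assumes dis: "K1 \<inter> K2 = {}"
  defines "w \<equiv> a *\<^sub>R (\<Sum>k\<in>K1. simplex_vec k) + b *\<^sub>R (\<Sum>k\<in>K2. simplex_vec k :: real^'n)"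
  shows "norm w ^ 2 = ((real CARD('n) + 1) * (real (card K1) * a\<^sup>2 + real (card K2) * b\<^sup>2)
            - (real (card K1) * a + real (card K2) * b) ^ 2) / real CARD('n)"
    "w \<bullet> simplex_vec j = ((real CARD('n) + 1) * (if j \<in> K1 then a else if j \<in> K2 then b else 0)
            - (real (card K1) * a + real (card K2) * b)) / real CARD('n)"
proof -
  define sb where "sb = (\<lambda>k. if k \<in> K1 then a else if k \<in> K2 then b else 0)"
  have ww: "w = (\<Sum>k\<in>UNIV. sb k *\<^sub>R (simplex_vec k :: real^'n))" using comb_b[OF dis, of a b] by (simp add: w_def sb_def)
  have ssum: "(\<Sum>k\<in>UNIV. sb k) = real (card K1) * a + real (card K2) * b"
    using sum_if_three[OF dis, of a b 0] by (simp add: sb_def)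
  have ssq: "(\<Sum>k\<in>UNIV. sb k ^ 2) = real (card K1) * a\<^sup>2 + real (card K2) * b\<^sup>2"
  proof -
    have "(\<Sum>k\<in>UNIV. sb k ^ 2) = (\<Sum>k\<in>UNIV. (if k \<in> K1 then a\<^sup>2 else if k \<in> K2 then b\<^sup>2 else 0))"
      by (rule sum.cong) (auto simp: sb_def)
    then show ?thesis using sum_if_three[OF dis, of "a\<^sup>2" "b\<^sup>2" 0] by simp
  qed
  show "norm w ^ 2 = ((real CARD('n) + 1) * (real (card K1) * a\<^sup>2 + real (card K2) * b\<^sup>2)
            - (real (card K1) * a + real (card K2) * b) ^ 2) / real CARD('n)"
    unfolding ww norm2_comb ssum ssq ..
  show "w \<bullet> simplex_vec j = ((real CARD('n) + 1) * (if j \<in> K1 then a else if j \<in> K2 then b else 0)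
            - (real (card K1) * a + real (card K2) * b)) / real CARD('n)"
    unfolding ww inner_comb ssum by (simp add: sb_def)
qed

lemma mu_pos:
  fixes v :: "real^'n::finite"
  assumes "tensor_eigenpair simplex_tensor d v \<mu>" "norm v = 1" "even d" "d \<ge> 2"
  shows "\<mu> > 0"
proof -
  have mu: "\<mu> = (\<Sum>k\<in>UNIV. (v \<bullet> simplex_vec k) ^ d)" using eig_mu[OF assms(1,2)] assms(4) by simp
  have v0: "v \<noteq> 0" using assms(2) by auto
  obtain j where j: "v \<bullet> simplex_vec j \<noteq> 0" using x_nonzero[OF v0] by blast
  have "(v \<bullet> simplex_vec j) ^ d > 0" using j assms(3) by (simp add: zero_less_power_eq)
  also have "\<dots> \<le> (\<Sum>k\<in>UNIV. (v \<bullet> simplex_vec k) ^ d)"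
    by (rule member_le_sum) (auto simp: assms(3) zero_le_even_power)
  finally show ?thesis using mu by simp
qed

lemma eig_unique:
  assumes "tensor_eigenpair T d v \<mu>" "tensor_eigenpair T d v \<mu>'"
  shows "\<mu> = \<mu>'"
proof -
  have "\<mu> *\<^sub>R v = \<mu>' *\<^sub>R v" "v \<noteq> 0" using assms by (auto simp: tensor_eigenpair_def)
  then show ?thesis by (metis scaleR_cancel_right)
qed


lemma rep_three:
  fixes v :: "real^'n::finite"
  assumes n2: "CARD('n) \<ge> 2" and ev: "even d" and d4: "d \<ge> 4"
    and nv: "norm v = 1" and eig: "tensor_eigenpair simplex_tensor d v \<mu>"
    and gb: "\<gamma> < \<beta>" and ba: "\<beta> < \<alpha>"
    and xs: "\<And>j. v \<bullet> simplex_vec j = \<alpha> \<or> v \<bullet> simplex_vec j = \<beta> \<or> v \<bullet> simplex_vec j = \<gamma>"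
    and ea: "v \<bullet> simplex_vec ja = \<alpha>" and eb: "v \<bullet> simplex_vec jb = \<beta>" and eg: "v \<bullet> simplex_vec jg = \<gamma>"
  shows "\<exists>(K1::'n option set) (K2::'n option set) (a::real) (b::real).
               K1 \<noteq> {} \<and> K2 \<noteq> {} \<and> K1 \<inter> K2 = {} \<and> card K1 \<le> CARD('n) \<and> card K2 \<le> CARD('n) \<and>
               0 < a \<and> a \<le> s_star CARD('n) d \<and> s_star CARD('n) d < b \<and> b \<le> 1 \<and>
               real (card K1) * a + real (card K2) * b = 1 \<and>
               g_fun CARD('n) d a / a = g_fun CARD('n) d b / b \<and>
               v = inverse (sqrt (((real CARD('n) + 1) * a\<^sup>2 * real (card K1)
                                   + (real CARD('n) + 1) * b\<^sup>2 * real (card K2) - 1) / real CARD('n)))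
                   *\<^sub>R (a *\<^sub>R (\<Sum>k\<in>K1. simplex_vec k) + b *\<^sub>R (\<Sum>k\<in>K2. simplex_vec k)) \<and>
               \<mu> = (real (card K1) * ((real CARD('n) + 1) * a - 1) ^ d
                     + real (card K2) * ((real CARD('n) + 1) * b - 1) ^ d
                     + real CARD('n) + 1 - real (card K1) - real (card K2)) /
                   (real CARD('n) powr (real d / 2) *
                    ((real CARD('n) + 1) * a\<^sup>2 * real (card K1)
                      + (real CARD('n) + 1) * b\<^sup>2 * real (card K2) - 1) powr (real d / 2)) \<and>
               \<mu> > 0"
proof -
  define N where "N = real CARD('n)"
  have N0: "N > 0" by (simp add: N_def)
  define x where "x = (\<lambda>j. v \<bullet> simplex_vec j)"
  define K1 where "K1 = {j. x j = \<beta>}"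
  define K2 where "K2 = {j. x j = \<alpha>}"
  define k1 where "k1 = real (card K1)"
  define k2 where "k2 = real (card K2)"
  have xj: "x j = (if j \<in> K1 then \<beta> else if j \<in> K2 then \<alpha> else \<gamma>)" for j
    using xs[of j] gb ba by (auto simp: x_def K1_def K2_def)
  have dis: "K1 \<inter> K2 = {}" using ba by (auto simp: K1_def K2_def)
  have jbK: "jb \<in> K1" using eb by (simp add: K1_def x_def)
  have jaK: "ja \<in> K2" using ea by (simp add: K2_def x_def)
  have jgK: "jg \<notin> K1 \<union> K2" using eg gb ba by (auto simp: K1_def K2_def x_def)
  have K1ne: "K1 \<noteq> {}" and K2ne: "K2 \<noteq> {}" using jbK jaK by auto
  have k1pos: "k1 \<ge> 1" using K1ne by (simp add: k1_def Suc_le_eq card_gt_0_iff)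
  have k2pos: "k2 \<ge> 1" using K2ne by (simp add: k2_def Suc_le_eq card_gt_0_iff)
  have "card (K1 \<union> K2) < card (UNIV :: 'n option set)" using jgK by (intro psubset_card_mono) auto
  then have cU: "card K1 + card K2 \<le> CARD('n)" using dis by (simp add: card_Un_disjoint card_option)
  then have k12: "k1 + k2 \<le> N" by (simp add: k1_def k2_def N_def flip: of_nat_add)
  have cK1: "card K1 \<le> CARD('n)" and cK2: "card K2 \<le> CARD('n)" using cU by auto
  have "0 = (\<Sum>j\<in>UNIV. x j)" by (simp add: x_def sum_x_zero)
  also have "\<dots> = k1 * \<beta> + k2 * \<alpha> + (N + 1 - k1 - k2) * \<gamma>"
    unfolding xj sum_if_three[OF dis] by (simp add: k1_def k2_def N_def)
  finally have sum0: "k1 * \<beta> + k2 * \<alpha> + (N + 1 - k1 - k2) * \<gamma> = 0" by simp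
  have g0: "\<gamma> < 0"
  proof (rule ccontr)
    assume "\<not> \<gamma> < 0"
    then have "k1 * \<beta> \<ge> 0" "k2 * \<alpha> > 0" "(N + 1 - k1 - k2) * \<gamma> \<ge> 0"
      using gb ba k1pos k2pos k12 by auto
    then show False using sum0 by linarith
  qed
  define t where "t = - \<gamma>"
  have t0: "t > 0" using g0 by (simp add: t_def)
  define a where "a = (\<beta> - \<gamma>) / ((N + 1) * t)"
  define b where "b = (\<alpha> - \<gamma>) / ((N + 1) * t)"
  have Nt: "(N + 1) * t > 0" using N0 t0 by simp
  have a0: "a > 0" using gb Nt by (simp add: a_def)
  have ab: "a < b" using ba Nt by (simp add: a_def b_def divide_strict_right_mono)
  have s1: "k1 * a + k2 * b = 1"
  proof -
    have "k1 * (\<beta> - \<gamma>) + k2 * (\<alpha> - \<gamma>) = (N + 1) * t"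
      using sum0 by (simp add: t_def algebra_simps)
    moreover have "k1 * a + k2 * b = (k1 * (\<beta> - \<gamma>) + k2 * (\<alpha> - \<gamma>)) / ((N + 1) * t)"
      by (simp add: a_def b_def add_divide_distrib)
    ultimately show ?thesis using N0 t0 by simp
  qed
  have b1: "b \<le> 1"
  proof -
    have "k2 * b < 1" using s1 k1pos a0 by (smt (verit) mult_pos_pos)
    moreover have "b \<le> k2 * b" using k2pos a0 ab by simp
    ultimately show ?thesis by simp
  qed
  define sb where "sb = (\<lambda>j. if j \<in> K1 then a else if j \<in> K2 then b else 0)"
  have Na: "t * ((N + 1) * a - 1) = \<beta>"
  proof -
    have e: "(N + 1) * a = (\<beta> - \<gamma>) / t" using N0 t0 by (simp add: a_def)
    have "t * ((\<beta> - \<gamma>) / t) = \<beta> - \<gamma>" using t0 by simp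
    then have "t * ((N + 1) * a - 1) = \<beta> - \<gamma> - t" unfolding e right_diff_distrib by simp
    then show ?thesis by (simp add: t_def)
  qed
  have Nb: "t * ((N + 1) * b - 1) = \<alpha>"
  proof -
    have e: "(N + 1) * b = (\<alpha> - \<gamma>) / t" using N0 t0 by (simp add: b_def)
    have "t * ((\<alpha> - \<gamma>) / t) = \<alpha> - \<gamma>" using t0 by simp
    then have "t * ((N + 1) * b - 1) = \<alpha> - \<gamma> - t" unfolding e right_diff_distrib by simp
    then show ?thesis by (simp add: t_def)
  qed
  have xsb: "x j = t * ((N + 1) * sb j - 1)" for j
    using Na Nb by (auto simp: xj sb_def t_def)
  define m where "m = d - 1"
  have F: "(N + 1) * x j ^ m - N * \<mu> * x j = (N + 1) * x jg ^ m - N * \<mu> * x jg" for j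
    using eig_imp[OF eig, of j] eig_imp[OF eig, of jg] by (simp add: x_def N_def m_def)
  have gform: "g_fun CARD('n) d s / s = N * \<mu> * t / t ^ m"
    if s0: "s > 0" and Fs: "(N + 1) * (t * ((N + 1) * s - 1)) ^ m - N * \<mu> * (t * ((N + 1) * s - 1))
       = (N + 1) * (- t) ^ m - N * \<mu> * (- t)" for s
  proof -
    have p1: "(t * ((N + 1) * s - 1)) ^ m = t ^ m * ((N + 1) * s - 1) ^ m" by (rule power_mult_distrib)
    have p2: "(- t) ^ m = (-1) ^ m * t ^ m" by (rule power_minus)
    have "(N + 1) * (t ^ m * (((N + 1) * s - 1) ^ m - (-1) ^ m)) = (N + 1) * (N * \<mu> * t * s)"
      using Fs unfolding p1 p2 by (simp add: algebra_simps)
    then have "t ^ m * g_fun CARD('n) d s = N * \<mu> * t * s"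
      using N0 by (simp add: g_fun_def m_def N_def)
    then show ?thesis using s0 t0 by (simp add: field_simps)
  qed
  have xg: "x jg = - t" using eg by (simp add: x_def t_def)
  have ga: "g_fun CARD('n) d a / a = N * \<mu> * t / t ^ m"
    using gform[OF a0] F[of jb] xsb[of jb] jbK xg by (simp add: sb_def)
  have gb': "g_fun CARD('n) d b / b = N * \<mu> * t / t ^ m"
  proof -
    have "ja \<notin> K1" using jaK dis by auto
    then show ?thesis using gform[of b] a0 ab F[of ja] xsb[of ja] jaK xg by (simp add: sb_def)
  qed
  have gab: "g_fun CARD('n) d a / a = g_fun CARD('n) d b / b" using ga gb' by simp
  note ss = s_star_props[OF n2 ev d4]
  have as: "a \<le> s_star CARD('n) d"
  proof (rule ccontr)
    assume "\<not> ?thesis"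
    then have "a \<in> {s_star CARD('n) d..}" "b \<in> {s_star CARD('n) d..}" using ab by auto
    then have "g_fun CARD('n) d a / a < g_fun CARD('n) d b / b" using ss ab by (auto simp: monotone_on_def)
    then show False using gab by simp
  qed
  have bs: "s_star CARD('n) d < b"
  proof (rule ccontr)
    assume "\<not> ?thesis"
    then have "a \<in> {0<..s_star CARD('n) d}" "b \<in> {0<..s_star CARD('n) d}" using ab a0 by auto
    then have "g_fun CARD('n) d b / b < g_fun CARD('n) d a / a" using ss ab by (auto simp: monotone_on_def)
    then show False using gab by simp
  qed
  define w where "w = a *\<^sub>R (\<Sum>k\<in>K1. simplex_vec k) + b *\<^sub>R (\<Sum>k\<in>K2. simplex_vec k :: real^'n)"
  define Q where "Q = (N + 1) * a\<^sup>2 * k1 + (N + 1) * b\<^sup>2 * k2 - 1"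
  note wf = w_b_facts[OF dis, of a b, folded w_def N_def k1_def k2_def, unfolded s1]
  have nw: "norm w = sqrt (Q / N)"
  proof -
    have "norm w ^ 2 = Q / N" unfolding wf(1) Q_def by (simp add: algebra_simps)
    then show ?thesis by (metis norm_ge_zero real_sqrt_unique)
  qed
  have vw: "v = (N * t) *\<^sub>R w"
  proof (rule inner_determines)
    fix j
    show "v \<bullet> simplex_vec j = ((N * t) *\<^sub>R w) \<bullet> simplex_vec j"
      using xsb[of j] N0 unfolding x_def by (simp add: wf(2) sb_def)
  qed
  have "N * t * norm w = 1" using nv vw Nt t0 N0 by simp
  then have invw: "inverse (norm w) = N * t" by (metis inverse_unique mult.commute)
  have vdef: "v = inverse (sqrt (Q / N)) *\<^sub>R w" using vw invw nw by simp
  have mu1: "\<mu> = (\<Sum>j\<in>UNIV. (v \<bullet> simplex_vec j) ^ d)" using eig_mu[OF eig nv] d4 by simp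
  have mu2: "(\<Sum>j\<in>UNIV. (v \<bullet> simplex_vec j) ^ d)
     = (k1 * ((N + 1) * a - 1) ^ d + k2 * ((N + 1) * b - 1) ^ d + N + 1 - k1 - k2) / (N powr (real d / 2) * Q powr (real d / 2))"
    using mu_b_val[OF dis s1[unfolded k1_def k2_def] vdef[unfolded Q_def w_def N_def k1_def k2_def] nv ev]
    by (simp add: N_def k1_def k2_def Q_def)
  have mupos: "\<mu> > 0" using mu_pos[OF eig nv ev] d4 by simp
  show ?thesis
    apply (rule exI[of _ K1], rule exI[of _ K2], rule exI[of _ a], rule exI[of _ b])
    using K1ne K2ne dis cK1 cK2 a0 as bs b1 s1 gab vdef mu1 mu2 mupos
    by (simp add: N_def k1_def k2_def Q_def w_def)
qed

lemma max_min_vals: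
  fixes v :: "real^'n::finite"
  assumes "v \<noteq> 0"
  shows "\<exists>\<alpha> \<gamma>. \<gamma> < \<alpha> \<and> (\<forall>j. \<gamma> \<le> v \<bullet> simplex_vec j \<and> v \<bullet> simplex_vec j \<le> \<alpha>)
      \<and> (\<exists>j. v \<bullet> simplex_vec j = \<alpha>) \<and> (\<exists>j. v \<bullet> simplex_vec j = \<gamma>)"
proof -
  define x where "x = (\<lambda>j. v \<bullet> simplex_vec j)"
  define \<alpha> where "\<alpha> = Max (range x)"
  define \<gamma> where "\<gamma> = Min (range x)"
  have fin: "finite (range x)" by simp
  have bnd: "\<gamma> \<le> x j \<and> x j \<le> \<alpha>" for j using fin by (auto simp: \<alpha>_def \<gamma>_def)
  have "\<alpha> \<in> range x" "\<gamma> \<in> range x" using fin by (auto simp: \<alpha>_def \<gamma>_def)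
  then obtain ja jg where ja: "x ja = \<alpha>" and jg: "x jg = \<gamma>" by auto
  have lt: "\<gamma> < \<alpha>"
  proof (rule ccontr)
    assume "\<not> \<gamma> < \<alpha>"
    then have all: "x j = \<alpha>" for j using bnd[of j] by (meson order.trans linorder_not_le order_antisym)
    have "0 = (\<Sum>j\<in>UNIV. x j)" by (simp add: x_def sum_x_zero)
    also have "\<dots> = (real CARD('n) + 1) * \<alpha>" by (simp add: all card_option)
    finally have "\<alpha> = 0" by (simp add: add_nonneg_eq_0_iff)
    then show False using x_nonzero[OF assms] all by (simp add: x_def)
  qed
  show ?thesis using lt bnd ja jg unfolding x_def by blast
qed

lemma forward_odd:
  fixes v :: "real^'n::finite"
  assumes od: "odd d" "d \<ge> 3" and nv: "norm v = 1" and eig: "tensor_eigenpair simplex_tensor d v \<mu>"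
  shows "\<exists>K::'n option set. K \<noteq> {} \<and> card K \<le> CARD('n) \<and>
               v = inverse (norm (\<Sum>k\<in>K. simplex_vec k)) *\<^sub>R (\<Sum>k\<in>K. simplex_vec k) \<and>
               \<mu> = ((real CARD('n) + 1 - real (card K)) ^ (d - 1) - real (card K) ^ (d - 1)) /
                   (real CARD('n) powr (real d / 2) *
                    (real (card K) * (real CARD('n) + 1 - real (card K))) powr (real d / 2 - 1))"
proof -
  have v0: "v \<noteq> 0" using nv by auto
  obtain \<alpha> \<gamma> where lt: "\<gamma> < \<alpha>" and bnd: "\<And>j. \<gamma> \<le> v \<bullet> simplex_vec j \<and> v \<bullet> simplex_vec j \<le> \<alpha>"
    and ja: "\<exists>j. v \<bullet> simplex_vec j = \<alpha>" and jg: "\<exists>j. v \<bullet> simplex_vec j = \<gamma>"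
    using max_min_vals[OF v0] by blast
  obtain ja where ja: "v \<bullet> simplex_vec ja = \<alpha>" using ja by blast
  obtain jg where jg: "v \<bullet> simplex_vec jg = \<gamma>" using jg by blast
  have two: "v \<bullet> simplex_vec j = \<alpha> \<or> v \<bullet> simplex_vec j = \<gamma>" for j
  proof (rule ccontr)
    assume "\<not> ?thesis"
    then have "\<gamma> < v \<bullet> simplex_vec j" "v \<bullet> simplex_vec j < \<alpha>" using bnd[of j] by auto
    moreover have "even (d - 1)" "d - 1 \<ge> 2" "real CARD('n) + 1 > 0" using od by auto
    ultimately show False
      using roots_even[of "d - 1" "real CARD('n) + 1" \<gamma> "v \<bullet> simplex_vec j" \<alpha> "real CARD('n) * \<mu>"]
        eig_imp[OF eig, of j] eig_imp[OF eig, of ja] eig_imp[OF eig, of jg] ja jg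
      by (simp add: mult.assoc)
  qed
  define K where "K = {j. v \<bullet> simplex_vec j = \<alpha>}"
  note r = rep_two[OF nv lt two, folded K_def]
  note ma = mu_a[OF r(1,2), of d]
  have "\<mu> = ((real CARD('n) + 1 - real (card K)) ^ (d - 1) + (-1) ^ d * real (card K) ^ (d - 1)) /
         (real CARD('n) powr (real d / 2) * (real (card K) * (real CARD('n) + 1 - real (card K))) powr (real d / 2 - 1))"
    using eig_unique[OF eig ma(2)[folded r(3)]] od by simp
  then show ?thesis using r od by (intro exI[of _ K]) simp
qed


lemma forward_even:
  fixes v :: "real^'n::finite"
  assumes n2: "CARD('n) \<ge> 2" and ev: "even d" and d4: "d \<ge> 4" and nv: "norm v = 1"
    and eig: "tensor_eigenpair simplex_tensor d v \<mu>"
  shows "(\<exists>K::'n option set. K \<noteq> {} \<and> card K \<le> CARD('n) \<and>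
               v = inverse (norm (\<Sum>k\<in>K. simplex_vec k)) *\<^sub>R (\<Sum>k\<in>K. simplex_vec k) \<and>
               \<mu> = ((real CARD('n) + 1 - real (card K)) ^ (d - 1) + real (card K) ^ (d - 1)) /
                   (real CARD('n) powr (real d / 2) *
                    (real (card K) * (real CARD('n) + 1 - real (card K))) powr (real d / 2 - 1)) \<and>
               \<mu> > 0)
      \<or> (\<exists>(K1::'n option set) (K2::'n option set) (a::real) (b::real).
               K1 \<noteq> {} \<and> K2 \<noteq> {} \<and> K1 \<inter> K2 = {} \<and> card K1 \<le> CARD('n) \<and> card K2 \<le> CARD('n) \<and>
               0 < a \<and> a \<le> s_star CARD('n) d \<and> s_star CARD('n) d < b \<and> b \<le> 1 \<and>
               real (card K1) * a + real (card K2) * b = 1 \<and>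
               g_fun CARD('n) d a / a = g_fun CARD('n) d b / b \<and>
               v = inverse (sqrt (((real CARD('n) + 1) * a\<^sup>2 * real (card K1)
                                   + (real CARD('n) + 1) * b\<^sup>2 * real (card K2) - 1) / real CARD('n)))
                   *\<^sub>R (a *\<^sub>R (\<Sum>k\<in>K1. simplex_vec k) + b *\<^sub>R (\<Sum>k\<in>K2. simplex_vec k)) \<and>
               \<mu> = (real (card K1) * ((real CARD('n) + 1) * a - 1) ^ d
                     + real (card K2) * ((real CARD('n) + 1) * b - 1) ^ d
                     + real CARD('n) + 1 - real (card K1) - real (card K2)) /
                   (real CARD('n) powr (real d / 2) *
                    ((real CARD('n) + 1) * a\<^sup>2 * real (card K1)
                      + (real CARD('n) + 1) * b\<^sup>2 * real (card K2) - 1) powr (real d / 2)) \<and>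
               \<mu> > 0)"
proof -
  have v0: "v \<noteq> 0" using nv by auto
  have mupos: "\<mu> > 0" using mu_pos[OF eig nv ev] d4 by simp
  obtain \<alpha> \<gamma> where lt: "\<gamma> < \<alpha>" and bnd: "\<And>j. \<gamma> \<le> v \<bullet> simplex_vec j \<and> v \<bullet> simplex_vec j \<le> \<alpha>"
    and ja: "\<exists>j. v \<bullet> simplex_vec j = \<alpha>" and jg: "\<exists>j. v \<bullet> simplex_vec j = \<gamma>"
    using max_min_vals[OF v0] by blast
  obtain ja where ja: "v \<bullet> simplex_vec ja = \<alpha>" using ja by blast
  obtain jg where jg: "v \<bullet> simplex_vec jg = \<gamma>" using jg by blast
  let ?F = "\<lambda>y. (real CARD('n) + 1) * y ^ (d - 1) - real CARD('n) * \<mu> * y"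
  have Feq: "?F (v \<bullet> simplex_vec j) = ?F (v \<bullet> simplex_vec j')" for j j'
    using eig_imp[OF eig, of j] eig_imp[OF eig, of j'] by simp
  have od: "odd (d - 1)" "d - 1 \<ge> 3" "real CARD('n) + 1 > 0" using ev d4 by auto
  show ?thesis
  proof (cases "\<forall>j. v \<bullet> simplex_vec j = \<alpha> \<or> v \<bullet> simplex_vec j = \<gamma>")
    case True
    then have two: "\<And>j. v \<bullet> simplex_vec j = \<alpha> \<or> v \<bullet> simplex_vec j = \<gamma>" by blast
    define K where "K = {j. v \<bullet> simplex_vec j = \<alpha>}"
    note r = rep_two[OF nv lt two, folded K_def]
    note ma = mu_a[OF r(1,2), of d]
    have "\<mu> = ((real CARD('n) + 1 - real (card K)) ^ (d - 1) + (-1) ^ d * real (card K) ^ (d - 1)) /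
         (real CARD('n) powr (real d / 2) * (real (card K) * (real CARD('n) + 1 - real (card K))) powr (real d / 2 - 1))"
      using eig_unique[OF eig ma(2)[folded r(3)]] d4 by simp
    then have "\<exists>K::'n option set. K \<noteq> {} \<and> card K \<le> CARD('n) \<and>
               v = inverse (norm (\<Sum>k\<in>K. simplex_vec k)) *\<^sub>R (\<Sum>k\<in>K. simplex_vec k) \<and>
               \<mu> = ((real CARD('n) + 1 - real (card K)) ^ (d - 1) + real (card K) ^ (d - 1)) /
                   (real CARD('n) powr (real d / 2) *
                    (real (card K) * (real CARD('n) + 1 - real (card K))) powr (real d / 2 - 1)) \<and>
               \<mu> > 0"
      using r ev mupos by (intro exI[of _ K]) simp
    then show ?thesis by blast
  next
    case False
    then obtain jb where jb1: "v \<bullet> simplex_vec jb \<noteq> \<alpha>" "v \<bullet> simplex_vec jb \<noteq> \<gamma>" by blast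
    define \<beta> where "\<beta> = v \<bullet> simplex_vec jb"
    have gb: "\<gamma> < \<beta>" and ba: "\<beta> < \<alpha>" using bnd[of jb] jb1 by (auto simp: \<beta>_def)
    have three: "v \<bullet> simplex_vec j = \<alpha> \<or> v \<bullet> simplex_vec j = \<beta> \<or> v \<bullet> simplex_vec j = \<gamma>" for j
    proof (rule ccontr)
      assume "\<not> ?thesis"
      then have ne: "v \<bullet> simplex_vec j \<noteq> \<alpha>" "v \<bullet> simplex_vec j \<noteq> \<beta>" "v \<bullet> simplex_vec j \<noteq> \<gamma>" by auto
      define y where "y = v \<bullet> simplex_vec j"
      have yb: "\<gamma> < y" "y < \<alpha>" using bnd[of j] ne by (auto simp: y_def)
      have Fy: "?F y = ?F \<alpha>" "?F \<beta> = ?F \<alpha>" "?F \<gamma> = ?F \<alpha>"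
        using Feq[of j ja] Feq[of jb ja] Feq[of jg ja] ja jg by (simp_all add: y_def \<beta>_def)
      show False
      proof (cases "y < \<beta>")
        case True
        then show False using roots_odd[OF od(1,2,3), of \<gamma> y \<beta> \<alpha> "real CARD('n) * \<mu>"] yb gb ba Fy
          by (simp add: mult.assoc)
      next
        case False
        then have "\<beta> < y" using ne(2) y_def by auto
        then show False using roots_odd[OF od(1,2,3), of \<gamma> \<beta> y \<alpha> "real CARD('n) * \<mu>"] yb gb ba Fy
          by (simp add: mult.assoc)
      qed
    qed
    have eb: "v \<bullet> simplex_vec jb = \<beta>" by (simp add: \<beta>_def)
    show ?thesis using rep_three[OF n2 ev d4 nv eig gb ba three ja eb jg] by blast
  qed
qed

lemma zero_iff:
  fixes K :: "'n::finite option set"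
  assumes "K \<noteq> {}" "card K \<le> CARD('n)" "d \<ge> 2"
  shows "(((real CARD('n) + 1 - real (card K)) ^ (d - 1) - real (card K) ^ (d - 1)) /
              (real CARD('n) powr (real d / 2) *
               (real (card K) * (real CARD('n) + 1 - real (card K))) powr (real d / 2 - 1)) = 0)
         \<longleftrightarrow> 2 * card K = CARD('n) + 1"
proof -
  define N where "N = real CARD('n)"
  define k where "k = real (card K)"
  have k0: "k > 0" using assms(1) by (simp add: k_def card_gt_0_iff)
  have kN: "N + 1 - k > 0" using assms(2) by (simp add: k_def N_def)
  have den: "N powr (real d / 2) * (k * (N + 1 - k)) powr (real d / 2 - 1) > 0"
    using k0 kN by (simp add: N_def)
  have "(N + 1 - k) ^ (d - 1) - k ^ (d - 1) = 0 \<longleftrightarrow> N + 1 - k = k"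
    using k0 kN assms(3) by (simp add: power_eq_iff_eq_base)
  also have "\<dots> \<longleftrightarrow> 2 * card K = CARD('n) + 1"
  proof -
    have "N + 1 - k = k \<longleftrightarrow> real (2 * card K) = real (CARD('n) + 1)" by (simp add: N_def k_def) linarith
    also have "\<dots> \<longleftrightarrow> 2 * card K = CARD('n) + 1" by (rule of_nat_eq_iff)
    finally show ?thesis .
  qed
  finally have c: "((N + 1 - k) ^ (d - 1) - k ^ (d - 1) = 0) \<longleftrightarrow> 2 * card K = CARD('n) + 1" .
  have e: "((N + 1 - k) ^ (d - 1) - k ^ (d - 1)) / (N powr (real d / 2) * (k * (N + 1 - k)) powr (real d / 2 - 1)) = 0
      \<longleftrightarrow> ((N + 1 - k) ^ (d - 1) - k ^ (d - 1) = 0)"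
  proof -
    have dnz: "N powr (real d / 2) * (k * (N + 1 - k)) powr (real d / 2 - 1) \<noteq> 0" using den by linarith
    show ?thesis by (simp only: divide_eq_0_iff dnz simp_thms)
  qed
  from trans[OF e c] show ?thesis unfolding N_def k_def .
qed


lemma p1:
  fixes v :: "real^'n::finite"
  assumes "d = 2" "norm v = 1"
  shows "tensor_eigenpair simplex_tensor d v (1 + 1 / real CARD('n))"
proof -
  have N0: "real CARD('n) > 0" by simp
  have "tensor_apply simplex_tensor d v = (\<Sum>k\<in>UNIV. (v \<bullet> simplex_vec k) *\<^sub>R simplex_vec k)"
    using assms(1) by (simp add: tensor_formula)
  also have "\<dots> = (1 + 1 / real CARD('n)) *\<^sub>R v"
  proof -
    let ?S = "(\<Sum>k\<in>UNIV. (v \<bullet> simplex_vec k) *\<^sub>R simplex_vec k)"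
    have h: "v = (real CARD('n) / (real CARD('n) + 1)) *\<^sub>R ?S"
      by (rule frame_expand)
    have "(1 + 1 / real CARD('n)) *\<^sub>R v = (1 + 1 / real CARD('n)) *\<^sub>R ((real CARD('n) / (real CARD('n) + 1)) *\<^sub>R ?S)"
      using arg_cong[OF h, of "\<lambda>x. (1 + 1 / real CARD('n)) *\<^sub>R x"] .
    also have "\<dots> = ((1 + 1 / real CARD('n)) * (real CARD('n) / (real CARD('n) + 1))) *\<^sub>R ?S"
      by (rule scaleR_scaleR)
    also have "(1 + 1 / real CARD('n)) * (real CARD('n) / (real CARD('n) + 1)) = 1"
    proof -
      have "1 + 1 / real CARD('n) = (real CARD('n) + 1) / real CARD('n)" using N0 by (simp add: field_simps)
      then show ?thesis using N0 by simp
    qed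
    finally show ?thesis by simp
  qed
  finally show ?thesis using assms(2) by (auto simp: tensor_eigenpair_def)
qed

lemma p22:
  fixes v :: "real^'n::finite"
  assumes od: "odd d \<and> 3 \<le> d" and nv: "norm v = 1"
  shows "tensor_eigenpair simplex_tensor d v \<mu> \<longleftrightarrow> (\<exists>K::'n option set. K \<noteq> {} \<and> card K \<le> CARD('n) \<and>
               v = inverse (norm (\<Sum>k\<in>K. simplex_vec k)) *\<^sub>R (\<Sum>k\<in>K. simplex_vec k) \<and>
               \<mu> = ((real CARD('n) + 1 - real (card K)) ^ (d - 1) - real (card K) ^ (d - 1)) /
                   (real CARD('n) powr (real d / 2) *
                    (real (card K) * (real CARD('n) + 1 - real (card K))) powr (real d / 2 - 1)))"
proof
  assume "tensor_eigenpair simplex_tensor d v \<mu>"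
  then show "(\<exists>K::'n option set. K \<noteq> {} \<and> card K \<le> CARD('n) \<and>
               v = inverse (norm (\<Sum>k\<in>K. simplex_vec k)) *\<^sub>R (\<Sum>k\<in>K. simplex_vec k) \<and>
               \<mu> = ((real CARD('n) + 1 - real (card K)) ^ (d - 1) - real (card K) ^ (d - 1)) /
                   (real CARD('n) powr (real d / 2) *
                    (real (card K) * (real CARD('n) + 1 - real (card K))) powr (real d / 2 - 1)))" using od by (intro forward_odd[OF _ _ nv]) auto
next
  assume "(\<exists>K::'n option set. K \<noteq> {} \<and> card K \<le> CARD('n) \<and>
               v = inverse (norm (\<Sum>k\<in>K. simplex_vec k)) *\<^sub>R (\<Sum>k\<in>K. simplex_vec k) \<and>
               \<mu> = ((real CARD('n) + 1 - real (card K)) ^ (d - 1) - real (card K) ^ (d - 1)) /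
                   (real CARD('n) powr (real d / 2) *
                    (real (card K) * (real CARD('n) + 1 - real (card K))) powr (real d / 2 - 1)))"
  then obtain K :: "'n option set" where K: "K \<noteq> {}" "card K \<le> CARD('n)"
    "v = inverse (norm (\<Sum>k\<in>K. simplex_vec k)) *\<^sub>R (\<Sum>k\<in>K. simplex_vec k)"
    "\<mu> = ((real CARD('n) + 1 - real (card K)) ^ (d - 1) - real (card K) ^ (d - 1)) /
                   (real CARD('n) powr (real d / 2) *
                    (real (card K) * (real CARD('n) + 1 - real (card K))) powr (real d / 2 - 1))"
    by (elim exE conjE) (rule that)
  have "d \<ge> 2" using od by simp
  from mu_a(2)[OF K(1,2) this] show "tensor_eigenpair simplex_tensor d v \<mu>"
    using K(3,4) od by simp
qed

lemma p24:
  fixes v :: "real^'n::finite"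
  assumes od: "odd d \<and> 3 \<le> d" and evn: "even CARD('n)" and h: "norm v = 1 \<and> tensor_eigenpair simplex_tensor d v \<mu>"
  shows "\<mu> \<noteq> 0"
proof
  assume mu0: "\<mu> = 0"
  have "(\<exists>K::'n option set. K \<noteq> {} \<and> card K \<le> CARD('n) \<and>
               v = inverse (norm (\<Sum>k\<in>K. simplex_vec k)) *\<^sub>R (\<Sum>k\<in>K. simplex_vec k) \<and>
               \<mu> = ((real CARD('n) + 1 - real (card K)) ^ (d - 1) - real (card K) ^ (d - 1)) /
                   (real CARD('n) powr (real d / 2) *
                    (real (card K) * (real CARD('n) + 1 - real (card K))) powr (real d / 2 - 1)))" using h od by (intro forward_odd[of d v \<mu>]) auto
  then obtain K :: "'n option set" where K: "K \<noteq> {}" "card K \<le> CARD('n)"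
    "\<mu> = ((real CARD('n) + 1 - real (card K)) ^ (d - 1) - real (card K) ^ (d - 1)) /
                   (real CARD('n) powr (real d / 2) *
                    (real (card K) * (real CARD('n) + 1 - real (card K))) powr (real d / 2 - 1))"
    by (elim exE conjE) (rule that)
  have "2 * card K = CARD('n) + 1" using zero_iff[OF K(1,2), of d] K(3) od mu0 by simp
  then show False using evn by presburger
qed

lemma p3:
  fixes v :: "real^'n::finite"
  assumes n2: "CARD('n) \<ge> 2" and ev: "even d \<and> 4 \<le> d" and nv: "norm v = 1"
  shows "tensor_eigenpair simplex_tensor d v \<mu> \<longleftrightarrow> ((\<exists>K::'n option set. K \<noteq> {} \<and> card K \<le> CARD('n) \<and>
               v = inverse (norm (\<Sum>k\<in>K. simplex_vec k)) *\<^sub>R (\<Sum>k\<in>K. simplex_vec k) \<and>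
               \<mu> = ((real CARD('n) + 1 - real (card K)) ^ (d - 1) + real (card K) ^ (d - 1)) /
                   (real CARD('n) powr (real d / 2) *
                    (real (card K) * (real CARD('n) + 1 - real (card K))) powr (real d / 2 - 1)) \<and>
               \<mu> > 0)
           \<or> (\<exists>(K1::'n option set) (K2::'n option set) (a::real) (b::real).
               K1 \<noteq> {} \<and> K2 \<noteq> {} \<and> K1 \<inter> K2 = {} \<and> card K1 \<le> CARD('n) \<and> card K2 \<le> CARD('n) \<and>
               0 < a \<and> a \<le> s_star CARD('n) d \<and> s_star CARD('n) d < b \<and> b \<le> 1 \<and>
               real (card K1) * a + real (card K2) * b = 1 \<and>
               g_fun CARD('n) d a / a = g_fun CARD('n) d b / b \<and>
               v = inverse (sqrt (((real CARD('n) + 1) * a\<^sup>2 * real (card K1)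
                                   + (real CARD('n) + 1) * b\<^sup>2 * real (card K2) - 1) / real CARD('n)))
                   *\<^sub>R (a *\<^sub>R (\<Sum>k\<in>K1. simplex_vec k) + b *\<^sub>R (\<Sum>k\<in>K2. simplex_vec k)) \<and>
               \<mu> = (real (card K1) * ((real CARD('n) + 1) * a - 1) ^ d
                     + real (card K2) * ((real CARD('n) + 1) * b - 1) ^ d
                     + real CARD('n) + 1 - real (card K1) - real (card K2)) /
                   (real CARD('n) powr (real d / 2) *
                    ((real CARD('n) + 1) * a\<^sup>2 * real (card K1)
                      + (real CARD('n) + 1) * b\<^sup>2 * real (card K2) - 1) powr (real d / 2)) \<and>
               \<mu> > 0))"
proof
  assume eig: "tensor_eigenpair simplex_tensor d v \<mu>"
  show "((\<exists>K::'n option set. K \<noteq> {} \<and> card K \<le> CARD('n) \<and>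
               v = inverse (norm (\<Sum>k\<in>K. simplex_vec k)) *\<^sub>R (\<Sum>k\<in>K. simplex_vec k) \<and>
               \<mu> = ((real CARD('n) + 1 - real (card K)) ^ (d - 1) + real (card K) ^ (d - 1)) /
                   (real CARD('n) powr (real d / 2) *
                    (real (card K) * (real CARD('n) + 1 - real (card K))) powr (real d / 2 - 1)) \<and>
               \<mu> > 0)
           \<or> (\<exists>(K1::'n option set) (K2::'n option set) (a::real) (b::real).
               K1 \<noteq> {} \<and> K2 \<noteq> {} \<and> K1 \<inter> K2 = {} \<and> card K1 \<le> CARD('n) \<and> card K2 \<le> CARD('n) \<and>
               0 < a \<and> a \<le> s_star CARD('n) d \<and> s_star CARD('n) d < b \<and> b \<le> 1 \<and>
               real (card K1) * a + real (card K2) * b = 1 \<and>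
               g_fun CARD('n) d a / a = g_fun CARD('n) d b / b \<and>
               v = inverse (sqrt (((real CARD('n) + 1) * a\<^sup>2 * real (card K1)
                                   + (real CARD('n) + 1) * b\<^sup>2 * real (card K2) - 1) / real CARD('n)))
                   *\<^sub>R (a *\<^sub>R (\<Sum>k\<in>K1. simplex_vec k) + b *\<^sub>R (\<Sum>k\<in>K2. simplex_vec k)) \<and>
               \<mu> = (real (card K1) * ((real CARD('n) + 1) * a - 1) ^ d
                     + real (card K2) * ((real CARD('n) + 1) * b - 1) ^ d
                     + real CARD('n) + 1 - real (card K1) - real (card K2)) /
                   (real CARD('n) powr (real d / 2) *
                    ((real CARD('n) + 1) * a\<^sup>2 * real (card K1)
                      + (real CARD('n) + 1) * b\<^sup>2 * real (card K2) - 1) powr (real d / 2)) \<and>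
               \<mu> > 0))" using forward_even[OF n2 _ _ nv eig] ev by simp
next
  assume "((\<exists>K::'n option set. K \<noteq> {} \<and> card K \<le> CARD('n) \<and>
               v = inverse (norm (\<Sum>k\<in>K. simplex_vec k)) *\<^sub>R (\<Sum>k\<in>K. simplex_vec k) \<and>
               \<mu> = ((real CARD('n) + 1 - real (card K)) ^ (d - 1) + real (card K) ^ (d - 1)) /
                   (real CARD('n) powr (real d / 2) *
                    (real (card K) * (real CARD('n) + 1 - real (card K))) powr (real d / 2 - 1)) \<and>
               \<mu> > 0)
           \<or> (\<exists>(K1::'n option set) (K2::'n option set) (a::real) (b::real).
               K1 \<noteq> {} \<and> K2 \<noteq> {} \<and> K1 \<inter> K2 = {} \<and> card K1 \<le> CARD('n) \<and> card K2 \<le> CARD('n) \<and>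
               0 < a \<and> a \<le> s_star CARD('n) d \<and> s_star CARD('n) d < b \<and> b \<le> 1 \<and>
               real (card K1) * a + real (card K2) * b = 1 \<and>
               g_fun CARD('n) d a / a = g_fun CARD('n) d b / b \<and>
               v = inverse (sqrt (((real CARD('n) + 1) * a\<^sup>2 * real (card K1)
                                   + (real CARD('n) + 1) * b\<^sup>2 * real (card K2) - 1) / real CARD('n)))
                   *\<^sub>R (a *\<^sub>R (\<Sum>k\<in>K1. simplex_vec k) + b *\<^sub>R (\<Sum>k\<in>K2. simplex_vec k)) \<and>
               \<mu> = (real (card K1) * ((real CARD('n) + 1) * a - 1) ^ d
                     + real (card K2) * ((real CARD('n) + 1) * b - 1) ^ d
                     + real CARD('n) + 1 - real (card K1) - real (card K2)) /
                   (real CARD('n) powr (real d / 2) *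
                    ((real CARD('n) + 1) * a\<^sup>2 * real (card K1)
                      + (real CARD('n) + 1) * b\<^sup>2 * real (card K2) - 1) powr (real d / 2)) \<and>
               \<mu> > 0))"
  then show "tensor_eigenpair simplex_tensor d v \<mu>"
  proof (elim disjE)
    assume "\<exists>K::'n option set. K \<noteq> {} \<and> card K \<le> CARD('n) \<and>
               v = inverse (norm (\<Sum>k\<in>K. simplex_vec k)) *\<^sub>R (\<Sum>k\<in>K. simplex_vec k) \<and>
               \<mu> = ((real CARD('n) + 1 - real (card K)) ^ (d - 1) + real (card K) ^ (d - 1)) /
                   (real CARD('n) powr (real d / 2) *
                    (real (card K) * (real CARD('n) + 1 - real (card K))) powr (real d / 2 - 1)) \<and>
               \<mu> > 0"
    then obtain K :: "'n option set" where K: "K \<noteq> {}" "card K \<le> CARD('n)"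
      "v = inverse (norm (\<Sum>k\<in>K. simplex_vec k)) *\<^sub>R (\<Sum>k\<in>K. simplex_vec k)"
      "\<mu> = ((real CARD('n) + 1 - real (card K)) ^ (d - 1) + real (card K) ^ (d - 1)) /
                   (real CARD('n) powr (real d / 2) *
                    (real (card K) * (real CARD('n) + 1 - real (card K))) powr (real d / 2 - 1))"
      by (elim exE conjE) (rule that)
    have "d \<ge> 2" using ev by simp
    from mu_a(2)[OF K(1,2) this] show "tensor_eigenpair simplex_tensor d v \<mu>"
      using K(3,4) ev by simp
  next
    assume "\<exists>(K1::'n option set) (K2::'n option set) (a::real) (b::real). K1 \<noteq> {} \<and> K2 \<noteq> {} \<and> K1 \<inter> K2 = {} \<and> card K1 \<le> CARD('n) \<and> card K2 \<le> CARD('n) \<and>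
               0 < a \<and> a \<le> s_star CARD('n) d \<and> s_star CARD('n) d < b \<and> b \<le> 1 \<and>
               real (card K1) * a + real (card K2) * b = 1 \<and>
               g_fun CARD('n) d a / a = g_fun CARD('n) d b / b \<and>
               v = inverse (sqrt (((real CARD('n) + 1) * a\<^sup>2 * real (card K1)
                                   + (real CARD('n) + 1) * b\<^sup>2 * real (card K2) - 1) / real CARD('n)))
                   *\<^sub>R (a *\<^sub>R (\<Sum>k\<in>K1. simplex_vec k) + b *\<^sub>R (\<Sum>k\<in>K2. simplex_vec k)) \<and>
               \<mu> = (real (card K1) * ((real CARD('n) + 1) * a - 1) ^ d
                     + real (card K2) * ((real CARD('n) + 1) * b - 1) ^ d
                     + real CARD('n) + 1 - real (card K1) - real (card K2)) /
                   (real CARD('n) powr (real d / 2) *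
                    ((real CARD('n) + 1) * a\<^sup>2 * real (card K1)
                      + (real CARD('n) + 1) * b\<^sup>2 * real (card K2) - 1) powr (real d / 2)) \<and>
               \<mu> > 0"
    then obtain K1 K2 :: "'n option set" and a b :: real where
      dis: "K1 \<inter> K2 = {}" and s1: "real (card K1) * a + real (card K2) * b = 1"
      and vdef: "v = inverse (sqrt (((real CARD('n) + 1) * a\<^sup>2 * real (card K1)
                                   + (real CARD('n) + 1) * b\<^sup>2 * real (card K2) - 1) / real CARD('n)))
                   *\<^sub>R (a *\<^sub>R (\<Sum>k\<in>K1. simplex_vec k) + b *\<^sub>R (\<Sum>k\<in>K2. simplex_vec k))"
      and a0: "0 < a" and abs: "a \<le> s_star CARD('n) d" "s_star CARD('n) d < b"
      and gab: "g_fun CARD('n) d a / a = g_fun CARD('n) d b / b"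
      and muf: "\<mu> = (real (card K1) * ((real CARD('n) + 1) * a - 1) ^ d
                     + real (card K2) * ((real CARD('n) + 1) * b - 1) ^ d
                     + real CARD('n) + 1 - real (card K1) - real (card K2)) /
                   (real CARD('n) powr (real d / 2) *
                    ((real CARD('n) + 1) * a\<^sup>2 * real (card K1)
                      + (real CARD('n) + 1) * b\<^sup>2 * real (card K2) - 1) powr (real d / 2))"
      by (elim exE conjE) (rule that)
    have b0: "b > 0" using a0 abs by linarith
    have d2: "d \<ge> 2" using ev by simp
    have evd: "even d" using ev by simp
    obtain \<mu>0 where e: "tensor_eigenpair simplex_tensor d v \<mu>0"
      using eig_b[OF dis s1 vdef nv d2 a0 b0 gab] by blast
    have "\<mu>0 = (\<Sum>j\<in>UNIV. (v \<bullet> simplex_vec j) ^ d)" using eig_mu[OF e nv] d2 by simp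
    also have "\<dots> = \<mu>"
      unfolding muf by (rule mu_b_val[OF dis s1 vdef nv evd])
    finally show "tensor_eigenpair simplex_tensor d v \<mu>" using e by simp
  qed
qed

theorem mainTheorem6:
  fixes d :: nat
  assumes "CARD('n::finite) \<ge> 2" and "d \<ge> 2"
  defines "n \<equiv> CARD('n)"
  defines "V \<equiv> (simplex_vec :: 'n option \<Rightarrow> real^'n)"
  defines "T \<equiv> (simplex_tensor :: 'n list \<Rightarrow> real)"
  shows
   "(d = 2 \<longrightarrow>
       (\<forall>v::real^'n. norm v = 1 \<longrightarrow> tensor_eigenpair T d v (1 + 1 / real n)))
  \<and> ((odd d \<and> d \<ge> 3) \<longrightarrow>
       (\<forall>K::'n option set. K \<noteq> {} \<and> card K \<le> n \<longrightarrow>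
          norm (\<Sum>k\<in>K. V k) = sqrt (real (card K) * (real n + 1 - real (card K)) / real n))
     \<and> (\<forall>(v::real^'n) \<mu>. norm v = 1 \<longrightarrow>
          (tensor_eigenpair T d v \<mu> \<longleftrightarrow>
            (\<exists>K::'n option set. K \<noteq> {} \<and> card K \<le> n \<and>
               v = inverse (norm (\<Sum>k\<in>K. V k)) *\<^sub>R (\<Sum>k\<in>K. V k) \<and>
               \<mu> = ((real n + 1 - real (card K)) ^ (d - 1) - real (card K) ^ (d - 1)) /
                   (real n powr (real d / 2) *
                    (real (card K) * (real n + 1 - real (card K))) powr (real d / 2 - 1)))))
     \<and> (\<forall>K::'n option set. K \<noteq> {} \<and> card K \<le> n \<longrightarrow>
          (((real n + 1 - real (card K)) ^ (d - 1) - real (card K) ^ (d - 1)) /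
              (real n powr (real d / 2) *
               (real (card K) * (real n + 1 - real (card K))) powr (real d / 2 - 1)) = 0
           \<longleftrightarrow> 2 * card K = n + 1))
     \<and> (even n \<longrightarrow> (\<forall>(v::real^'n) \<mu>. norm v = 1 \<and> tensor_eigenpair T d v \<mu> \<longrightarrow> \<mu> \<noteq> 0)))
  \<and> ((even d \<and> d \<ge> 4) \<longrightarrow>
       (\<forall>(v::real^'n) \<mu>. norm v = 1 \<longrightarrow>
          (tensor_eigenpair T d v \<mu> \<longleftrightarrow>
            ((\<exists>K::'n option set. K \<noteq> {} \<and> card K \<le> n \<and>
               v = inverse (norm (\<Sum>k\<in>K. V k)) *\<^sub>R (\<Sum>k\<in>K. V k) \<and>
               \<mu> = ((real n + 1 - real (card K)) ^ (d - 1) + real (card K) ^ (d - 1)) /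
                   (real n powr (real d / 2) *
                    (real (card K) * (real n + 1 - real (card K))) powr (real d / 2 - 1)) \<and>
               \<mu> > 0)
           \<or> (\<exists>(K1::'n option set) (K2::'n option set) (a::real) (b::real).
               K1 \<noteq> {} \<and> K2 \<noteq> {} \<and> K1 \<inter> K2 = {} \<and> card K1 \<le> n \<and> card K2 \<le> n \<and>
               0 < a \<and> a \<le> s_star n d \<and> s_star n d < b \<and> b \<le> 1 \<and>
               real (card K1) * a + real (card K2) * b = 1 \<and>
               g_fun n d a / a = g_fun n d b / b \<and>
               v = inverse (sqrt (((real n + 1) * a\<^sup>2 * real (card K1)
                                   + (real n + 1) * b\<^sup>2 * real (card K2) - 1) / real n))
                   *\<^sub>R (a *\<^sub>R (\<Sum>k\<in>K1. V k) + b *\<^sub>R (\<Sum>k\<in>K2. V k)) \<and>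
               \<mu> = (real (card K1) * ((real n + 1) * a - 1) ^ d
                     + real (card K2) * ((real n + 1) * b - 1) ^ d
                     + real n + 1 - real (card K1) - real (card K2)) /
                   (real n powr (real d / 2) *
                    ((real n + 1) * a\<^sup>2 * real (card K1)
                      + (real n + 1) * b\<^sup>2 * real (card K2) - 1) powr (real d / 2)) \<and>
               \<mu> > 0)))))"
  unfolding n_def V_def T_def
  apply (intro conjI impI allI)
  subgoal by (rule p1)
  subgoal by (rule norm_wK)
  subgoal by (rule p22)
  subgoal using assms(2) by (intro zero_iff) auto
  subgoal by (rule p24)
  subgoal by (rule p3[OF assms(1)])
  done

end
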